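(* Let $1\le i,j,k,l\le n$ with $i<j$ and $k<l$. In ${\boldsymbol U}_{v}(\mathfrak q_n)$: if $i<j<k<l$, or $i<k<l<j$, or ($i=k$ and $j=l$), or $k<l<i<j$, or $k<i<j<l$, then $\mathsf E_{i,j}\overline{\mathsf E}_{k,l}=\overline{\mathsf E}_{k,l}\mathsf E_{i,j}$; moreover \[ \mathsf E_{i,j}\overline{\mathsf E}_{k,l}=\begin{cases} v^{-1}\overline{\mathsf E}_{k,l}\mathsf E_{i,j}-\overline{\mathsf E}_{i,l} & (i<j=k<l),\\ v\,\overline{\mathsf E}_{k,l}\mathsf E_{i,j} & (i=k<j<l),\\ \overline{\mathsf E}_{k,l}\mathsf E_{i,j}+(v-v^{-1})\mathsf E_{k,j}\overline{\mathsf E}_{i,l} & (i<k<j<l),\\ v^{-1}\overline{\mathsf E}_{k,l}\mathsf E_{i,j}+\overline{\mathsf E}_{i,j}\mathsf E_{k,j}-v^{-1}\mathsf E_{k,j}\overline{\mathsf E}_{i,j} & (i<k<j=l),\\ v^{-1}\overline{\mathsf E}_{k,l}\mathsf E_{i,j}-(\mathsf E_{\bar i}\mathsf E_{i+1,j}-v^{-1}\mathsf E_{i+1,j}\mathsf E_{\bar i})\mathsf E_{k,i}+v^{-1}\mathsf E_{k,i}(\mathsf E_{\bar i}\mathsf E_{i+1,j}-v^{-1}\mathsf E_{i+1,j}\mathsf E_{\bar i}) & (k<l=i<j,\ j>i+1),\\ v^{-1}\overline{\mathsf E}_{k,l}\mathsf E_{i,j} & (k=i<l<j),\\ \overline{\mathsf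 E}_{k,l}\mathsf E_{i,j}+v^{-1}\overline{\mathsf E}_{i,l}\mathsf E_{k,j}-v\,\mathsf E_{k,j}\overline{\mathsf E}_{i,l} & (k<i<l<j),\\ v\,\overline{\mathsf E}_{k,l}\mathsf E_{i,j}-v\,\mathsf E_{k,j}\overline{\mathsf E}_{i,j}+\overline{\mathsf E}_{i,j}\mathsf E_{k,j} & (k<i<j=l). \end{cases} \]
   Context: Let $v$ be an indeterminate. The quantum queer superalgebra ${\boldsymbol U}_{v}(\mathfrak q_n)$ is the associative superalgebra over $\mathbb Q(v)$ generated by even generators $\mathsf K_i,\mathsf K_i^{-1}$ ($1\le i\le n$), $\mathsf E_j,\mathsf F_j$ ($1\le j\le n-1$) and odd generators $\mathsf K_{\bar i}$ ($1\le i\le n$), $\mathsf E_{\bar j},\mathsf F_{\bar j}$ ($1\le j\le n-1$), subject to the following relations (indices are taken only where they make sense), where $(\epsilon_i,\alpha_j)=\delta_{i,j}-\delta_{i,j+1}$: (QQ1) $\mathsf K_i\mathsf K_i^{-1}=\mathsf K_i^{-1}\mathsf K_i=1$, $\mathsf K_i\mathsf K_j=\mathsf K_j\mathsf K_i$, $\mathsf K_i\mathsf K_{\bar j}=\mathsf K_{\bar j}\mathsf K_i$, $\mathsf K_{\bar i}\mathsf K_{\bar j}+\mathsf K_{\bar j}\mathsf K_{\bar i}=2\delta_{i,j}\frac{\mathsf K_i^2-\mathsf K_i^{-2}}{v^2-v^{-2}}$. (QQ2) $\mathsf K_i\mathsf E_j=v^{(\epsilon_i,\alpha_j)}\mathsf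 E_j\mathsf K_i$, $\mathsf K_i\mathsf E_{\bar j}=v^{(\epsilon_i,\alpha_j)}\mathsf E_{\bar j}\mathsf K_i$, $\mathsf K_i\mathsf F_j=v^{-(\epsilon_i,\alpha_j)}\mathsf F_j\mathsf K_i$, $\mathsf K_i\mathsf F_{\bar j}=v^{-(\epsilon_i,\alpha_j)}\mathsf F_{\bar j}\mathsf K_i$. (QQ3) $\mathsf K_{\bar i}\mathsf E_i-v\mathsf E_i\mathsf K_{\bar i}=\mathsf E_{\bar i}\mathsf K_i^{-1}$, $v\mathsf K_{\bar i}\mathsf E_{i-1}-\mathsf E_{i-1}\mathsf K_{\bar i}=-\mathsf K_i^{-1}\mathsf E_{\overline{i-1}}$, $\mathsf K_{\bar i}\mathsf F_i-v\mathsf F_i\mathsf K_{\bar i}=-\mathsf F_{\bar i}\mathsf K_i$, $v\mathsf K_{\bar i}\mathsf F_{i-1}-\mathsf F_{i-1}\mathsf K_{\bar i}=\mathsf K_i\mathsf F_{\overline{i-1}}$, $\mathsf K_{\bar i}\mathsf E_{\bar i}+v\mathsf E_{\bar i}\mathsf K_{\bar i}=\mathsf E_i\mathsf K_i^{-1}$, $v\mathsf K_{\bar i}\mathsf E_{\overline{i-1}}+\mathsf E_{\overline{i-1}}\mathsf K_{\bar i}=\mathsf K_i^{-1}\mathsf E_{i-1}$, $\mathsf K_{\bar i}\mathsf F_{\bar i}+v\mathsf F_{\bar i}\mathsf K_{\bar i}=\mathsf F_i\mathsf K_i$, $v\mathsf K_{\bar i}\mathsf F_{\overline{i-1}}+\mathsf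 F_{\overline{i-1}}\mathsf K_{\bar i}=\mathsf K_i\mathsf F_{i-1}$, and for $j\ne i,i-1$: $\mathsf K_{\bar i}\mathsf E_j=\mathsf E_j\mathsf K_{\bar i}$, $\mathsf K_{\bar i}\mathsf F_j=\mathsf F_j\mathsf K_{\bar i}$, $\mathsf K_{\bar i}\mathsf E_{\bar j}=-\mathsf E_{\bar j}\mathsf K_{\bar i}$, $\mathsf K_{\bar i}\mathsf F_{\bar j}=-\mathsf F_{\bar j}\mathsf K_{\bar i}$. (QQ4) $\mathsf E_i\mathsf F_j-\mathsf F_j\mathsf E_i=\delta_{i,j}\frac{\mathsf K_i\mathsf K_{i+1}^{-1}-\mathsf K_i^{-1}\mathsf K_{i+1}}{v-v^{-1}}$, $\mathsf E_{\bar i}\mathsf F_{\bar j}+\mathsf F_{\bar j}\mathsf E_{\bar i}=\delta_{i,j}\big(\frac{\mathsf K_i\mathsf K_{i+1}-\mathsf K_i^{-1}\mathsf K_{i+1}^{-1}}{v-v^{-1}}+(v-v^{-1})\mathsf K_{\bar i}\mathsf K_{\overline{i+1}}\big)$, $\mathsf E_i\mathsf F_{\bar j}-\mathsf F_{\bar j}\mathsf E_i=\delta_{i,j}(\mathsf K_{i+1}^{-1}\mathsf K_{\bar i}-\mathsf K_{\overline{i+1}}\mathsf K_i^{-1})$, $\mathsf E_{\bar i}\mathsf F_j-\mathsf F_j\mathsf E_{\bar i}=\delta_{i,j}(\mathsf K_{i+1}\mathsf K_{\bar i}-\mathsf K_{\overline{i+1}}\mathsf K_i)$. (QQ5) $\mathsf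 E_{\bar i}^2=-\frac{v-v^{-1}}{v+v^{-1}}\mathsf E_i^2$, $\mathsf F_{\bar i}^2=\frac{v-v^{-1}}{v+v^{-1}}\mathsf F_i^2$; for $|i-j|\ne1$: $\mathsf E_i\mathsf E_{\bar j}=\mathsf E_{\bar j}\mathsf E_i$, $\mathsf F_i\mathsf F_{\bar j}=\mathsf F_{\bar j}\mathsf F_i$; for $|i-j|>1$: $\mathsf E_i\mathsf E_j=\mathsf E_j\mathsf E_i$, $\mathsf F_i\mathsf F_j=\mathsf F_j\mathsf F_i$, $\mathsf E_{\bar i}\mathsf E_{\bar j}=-\mathsf E_{\bar j}\mathsf E_{\bar i}$, $\mathsf F_{\bar i}\mathsf F_{\bar j}=-\mathsf F_{\bar j}\mathsf F_{\bar i}$; $\mathsf E_i\mathsf E_{i+1}-v\mathsf E_{i+1}\mathsf E_i=\mathsf E_{\bar i}\mathsf E_{\overline{i+1}}+v\mathsf E_{\overline{i+1}}\mathsf E_{\bar i}$, $\mathsf E_i\mathsf E_{\overline{i+1}}-v\mathsf E_{\overline{i+1}}\mathsf E_i=\mathsf E_{\bar i}\mathsf E_{i+1}-v\mathsf E_{i+1}\mathsf E_{\bar i}$, $\mathsf F_i\mathsf F_{i+1}-v\mathsf F_{i+1}\mathsf F_i=-(\mathsf F_{\bar i}\mathsf F_{\overline{i+1}}+v\mathsf F_{\overline{i+1}}\mathsf F_{\bar i})$, $\mathsf F_i\mathsf F_{\overline{i+1}}-v\mathsf F_{\overline{i+1}}\mathsf F_i=\mathsf F_{\bar i}\mathsf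 F_{i+1}-v\mathsf F_{i+1}\mathsf F_{\bar i}$. (QQ6) for $|i-j|=1$: $\mathsf E_i^2X-(v+v^{-1})\mathsf E_iX\mathsf E_i+X\mathsf E_i^2=0$ for $X\in\{\mathsf E_j,\mathsf E_{\bar j}\}$ and $\mathsf F_i^2Y-(v+v^{-1})\mathsf F_iY\mathsf F_i+Y\mathsf F_i^2=0$ for $Y\in\{\mathsf F_j,\mathsf F_{\bar j}\}$. Quantum root vectors: for $1\le i\le n-1$ put $\mathsf E_{i,i+1}=\mathsf E_i$, $\overline{\mathsf E}_{i,i+1}=\mathsf E_{\bar i}$, $\mathsf E_{i+1,i}=\mathsf F_i$, $\overline{\mathsf E}_{i+1,i}=\mathsf F_{\bar i}$, and recursively for $i+1<j\le n$: $\mathsf E_{i,j}=-\mathsf E_{i,j-1}\mathsf E_{j-1}+v^{-1}\mathsf E_{j-1}\mathsf E_{i,j-1}$, $\overline{\mathsf E}_{i,j}=-\mathsf E_{i,j-1}\mathsf E_{\overline{j-1}}+v^{-1}\mathsf E_{\overline{j-1}}\mathsf E_{i,j-1}$, $\mathsf E_{j,i}=-\mathsf F_{j-1}\mathsf E_{j-1,i}+v\mathsf E_{j-1,i}\mathsf F_{j-1}$, $\overline{\mathsf E}_{j,i}=-\mathsf F_{\overline{j-1}}\mathsf E_{j-1,i}+v\mathsf E_{j-1,i}\mathsf F_{\overline{j-1}}$. *)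

theory Defs
  imports "HOL-Computational_Algebra.Polynomial" "HOL-Computational_Algebra.Fraction_Field"
begin

type_synonym qv = "rat poly fract"

definition vv :: qv where "vv = Fract [:0, 1:] 1"

definition eps_alpha :: "nat \<Rightarrow> nat \<Rightarrow> int" where
  "eps_alpha i j = (if i = j then 1 else 0) - (if i = j + 1 then 1 else 0)"

(* A Q(v)-algebra structure on the ring 'a: s is a ring homomorphism Q(v) -> 'a
   with central image. *)
definition qv_algebra :: "(qv \<Rightarrow> 'a::ring_1) \<Rightarrow> bool" where
  "qv_algebra s \<longleftrightarrow> s 1 = 1 \<and> (\<forall>a b. s (a + b) = s a + s b) \<and> (\<forall>a b. s (a * b) = s a * s b)
     \<and> (\<forall>a x. s a * x = x * s a)"

(* Elements K_i, K_i^{-1}, K_{bar i} (1 <= i <= n), E_j, E_{bar j}, F_j, F_{bar j} (1 <= j <= n-1)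
   of the Q(v)-algebra satisfy the defining relations (QQ1)-(QQ6) of U_v(q_n). *)
definition qq_relations ::
  "(qv \<Rightarrow> 'a::ring_1) \<Rightarrow> nat \<Rightarrow> (nat \<Rightarrow> 'a) \<Rightarrow> (nat \<Rightarrow> 'a) \<Rightarrow> (nat \<Rightarrow> 'a)
    \<Rightarrow> (nat \<Rightarrow> 'a) \<Rightarrow> (nat \<Rightarrow> 'a) \<Rightarrow> (nat \<Rightarrow> 'a) \<Rightarrow> (nat \<Rightarrow> 'a) \<Rightarrow> bool" where
  "qq_relations s n K Ki Kb E Eb F Fb \<longleftrightarrow>
   (let v = s vv; vi = s (inverse vv) in
   \<comment> \<open>QQ1\<close>
   (\<forall>i\<in>{1..n}. K i * Ki i = 1 \<and> Ki i * K i = 1) \<and>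
   (\<forall>i\<in>{1..n}. \<forall>j\<in>{1..n}. K i * K j = K j * K i \<and> K i * Kb j = Kb j * K i \<and>
      Kb i * Kb j + Kb j * Kb i =
        (if i = j then 2 * s (inverse (vv^2 - (inverse vv)^2)) * (K i ^ 2 - Ki i ^ 2) else 0)) \<and>
   \<comment> \<open>QQ2\<close>
   (\<forall>i\<in>{1..n}. \<forall>j\<in>{1..n-1}.
      K i * E j = s (vv powi eps_alpha i j) * E j * K i \<and>
      K i * Eb j = s (vv powi eps_alpha i j) * Eb j * K i \<and>
      K i * F j = s (vv powi (- eps_alpha i j)) * F j * K i \<and>
      K i * Fb j = s (vv powi (- eps_alpha i j)) * Fb j * K i) \<and>
   \<comment> \<open>QQ3\<close>
   (\<forall>i\<in>{1..n}.
      (i \<le> n - 1 \<longrightarrow>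
         Kb i * E i - v * E i * Kb i = Eb i * Ki i \<and>
         Kb i * F i - v * F i * Kb i = - (Fb i * K i) \<and>
         Kb i * Eb i + v * Eb i * Kb i = E i * Ki i \<and>
         Kb i * Fb i + v * Fb i * Kb i = F i * K i) \<and>
      (2 \<le> i \<longrightarrow>
         v * Kb i * E (i-1) - E (i-1) * Kb i = - (Ki i * Eb (i-1)) \<and>
         v * Kb i * F (i-1) - F (i-1) * Kb i = K i * Fb (i-1) \<and>
         v * Kb i * Eb (i-1) + Eb (i-1) * Kb i = Ki i * E (i-1) \<and>
         v * Kb i * Fb (i-1) + Fb (i-1) * Kb i = K i * F (i-1)) \<and>
      (\<forall>j\<in>{1..n-1}. j \<noteq> i \<and> j \<noteq> i - 1 \<longrightarrow>
         Kb i * E j = E j * Kb i \<and> Kb i * F j = F j * Kb i \<and>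
         Kb i * Eb j = - (Eb j * Kb i) \<and> Kb i * Fb j = - (Fb j * Kb i))) \<and>
   \<comment> \<open>QQ4\<close>
   (\<forall>i\<in>{1..n-1}. \<forall>j\<in>{1..n-1}.
      E i * F j - F j * E i =
        (if i = j then s (inverse (vv - inverse vv)) * (K i * Ki (i+1) - Ki i * K (i+1)) else 0) \<and>
      Eb i * Fb j + Fb j * Eb i =
        (if i = j then s (inverse (vv - inverse vv)) * (K i * K (i+1) - Ki i * Ki (i+1))
                        + s (vv - inverse vv) * Kb i * Kb (i+1) else 0) \<and>
      E i * Fb j - Fb j * E i = (if i = j then Ki (i+1) * Kb i - Kb (i+1) * Ki i else 0) \<and>
      Eb i * F j - F j * Eb i = (if i = j then K (i+1) * Kb i - Kb (i+1) * K i else 0)) \<and>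
   \<comment> \<open>QQ5\<close>
   (\<forall>i\<in>{1..n-1}.
      Eb i ^ 2 = - (s ((vv - inverse vv) / (vv + inverse vv)) * E i ^ 2) \<and>
      Fb i ^ 2 = s ((vv - inverse vv) / (vv + inverse vv)) * F i ^ 2) \<and>
   (\<forall>i\<in>{1..n-1}. \<forall>j\<in>{1..n-1}.
      (\<not> (i = j + 1 \<or> j = i + 1) \<longrightarrow> E i * Eb j = Eb j * E i \<and> F i * Fb j = Fb j * F i) \<and>
      (i + 1 < j \<or> j + 1 < i \<longrightarrow>
         E i * E j = E j * E i \<and> F i * F j = F j * F i \<and>
         Eb i * Eb j = - (Eb j * Eb i) \<and> Fb i * Fb j = - (Fb j * Fb i))) \<and>
   (\<forall>i. 1 \<le> i \<and> i + 1 \<le> n - 1 \<longrightarrow>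
      E i * E (i+1) - v * E (i+1) * E i = Eb i * Eb (i+1) + v * Eb (i+1) * Eb i \<and>
      E i * Eb (i+1) - v * Eb (i+1) * E i = Eb i * E (i+1) - v * E (i+1) * Eb i \<and>
      F i * F (i+1) - v * F (i+1) * F i = - (Fb i * Fb (i+1) + v * Fb (i+1) * Fb i) \<and>
      F i * Fb (i+1) - v * Fb (i+1) * F i = Fb i * F (i+1) - v * F (i+1) * Fb i) \<and>
   \<comment> \<open>QQ6\<close>
   (\<forall>i\<in>{1..n-1}. \<forall>j\<in>{1..n-1}. (i = j + 1 \<or> j = i + 1) \<longrightarrow>
      (\<forall>X\<in>{E j, Eb j}. E i ^ 2 * X - s (vv + inverse vv) * E i * X * E i + X * E i ^ 2 = 0) \<and>
      (\<forall>Y\<in>{F j, Fb j}. F i ^ 2 * Y - s (vv + inverse vv) * F i * Y * F i + Y * F i ^ 2 = 0)))"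

(* Quantum root vectors E_{i,j} and bar E_{i,j} for i < j, indexed by d = j - i - 1;
   w stands for v^{-1}. *)
fun rootE_aux :: "'a::ring_1 \<Rightarrow> (nat \<Rightarrow> 'a) \<Rightarrow> nat \<Rightarrow> nat \<Rightarrow> 'a" where
  "rootE_aux w E i 0 = E i"
| "rootE_aux w E i (Suc d) =
     - (rootE_aux w E i d * E (i + d + 1)) + w * E (i + d + 1) * rootE_aux w E i d"

fun rootEb_aux :: "'a::ring_1 \<Rightarrow> (nat \<Rightarrow> 'a) \<Rightarrow> (nat \<Rightarrow> 'a) \<Rightarrow> nat \<Rightarrow> nat \<Rightarrow> 'a" where
  "rootEb_aux w E Eb i 0 = Eb i"
| "rootEb_aux w E Eb i (Suc d) =
     - (rootE_aux w E i d * Eb (i + d + 1)) + w * Eb (i + d + 1) * rootE_aux w E i d"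

definition qE :: "(qv \<Rightarrow> 'a::ring_1) \<Rightarrow> (nat \<Rightarrow> 'a) \<Rightarrow> nat \<Rightarrow> nat \<Rightarrow> 'a" where
  "qE s E i j = rootE_aux (s (inverse vv)) E i (j - i - 1)"

definition qEb :: "(qv \<Rightarrow> 'a::ring_1) \<Rightarrow> (nat \<Rightarrow> 'a) \<Rightarrow> (nat \<Rightarrow> 'a) \<Rightarrow> nat \<Rightarrow> nat \<Rightarrow> 'a" where
  "qEb s E Eb i j = rootEb_aux (s (inverse vv)) E Eb i (j - i - 1)"

end

theory Submission
  imports Defs
begin

definition RR :: "'a::ring_1 \<Rightarrow> (nat \<Rightarrow> 'a) \<Rightarrow> nat \<Rightarrow> nat \<Rightarrow> 'a" where
  "RR w G i j = rootE_aux w G i (j - i - 1)"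

lemma rootE_local: "(\<And>a. i \<le> a \<Longrightarrow> a \<le> i + d \<Longrightarrow> G a = H a) \<Longrightarrow> rootE_aux w G i d = rootE_aux w H i d"
  by (induction d) auto

lemma RR_local: "i < j \<Longrightarrow> (\<And>a. i \<le> a \<Longrightarrow> a < j \<Longrightarrow> G a = H a) \<Longrightarrow> RR w G i j = RR w H i j"
  unfolding RR_def by (rule rootE_local) auto

lemma RR_1[simp]: "RR w G i (Suc i) = G i" by (simp add: RR_def)

lemma RR_rec: "i < j \<Longrightarrow> RR w G i (Suc j) = w * (G j * RR w G i j) - RR w G i j * G j"
proof -
  assume "i < j"
  then obtain d where j: "j = Suc (i + d)" using less_imp_Suc_add by blast
  then have "RR w G i j = rootE_aux w G i d" "RR w G i (Suc j) = rootE_aux w G i (Suc d)"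
    by (simp_all add: RR_def)
  then show ?thesis by (simp add: j mult.assoc)
qed

lemma rootE_comm: "(\<And>a. i \<le> a \<Longrightarrow> a \<le> i + d \<Longrightarrow> x * G a = G a * x) \<Longrightarrow> (\<And>y. w * y = y * w)
   \<Longrightarrow> x * rootE_aux w G i d = rootE_aux w G i d * x"
proof (induction d)
  case 0 then show ?case by simp
next
  case (Suc d)
  have h: "x * rootE_aux w G i d = rootE_aux w G i d * x" using Suc by simp
  have g: "x * G (i + d + 1) = G (i + d + 1) * x" using Suc.prems by simp
  define R where "R = rootE_aux w G i d"
  define g' where "g' = G (i + d + 1)"
  have h': "x * R = R * x" using h R_def by simp
  have g'': "x * g' = g' * x" using g g'_def by simp
  have wc: "x * w = w * x" using Suc.prems(2)[of x] by simp
  have A: "x * (R * g') = (R * g') * x"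
  proof -
    have "x * (R * g') = (x * R) * g'" by (simp add: mult.assoc)
    also have "\<dots> = R * (x * g')" by (simp add: h' mult.assoc)
    also have "\<dots> = (R * g') * x" by (simp add: g'' mult.assoc)
    finally show ?thesis .
  qed
  have B: "x * (w * g' * R) = (w * g' * R) * x"
  proof -
    have "x * (w * g' * R) = ((x * w) * g') * R" by (simp add: mult.assoc)
    also have "\<dots> = w * ((x * g') * R)" by (simp add: wc mult.assoc)
    also have "\<dots> = w * (g' * (x * R))" by (simp add: g'' mult.assoc)
    also have "\<dots> = (w * g' * R) * x" by (simp add: h' mult.assoc)
    finally show ?thesis .
  qed
  have "rootE_aux w G i (Suc d) = - (R * g') + w * g' * R" by (simp add: R_def g'_def)
  then show ?case using A B by (simp only: distrib_left distrib_right mult_minus_right mult_minus_left)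
qed

lemma RR_comm: "i < j \<Longrightarrow> (\<And>a. i \<le> a \<Longrightarrow> a < j \<Longrightarrow> x * G a = G a * x) \<Longrightarrow> (\<And>y. w * y = y * w)
   \<Longrightarrow> x * RR w G i j = RR w G i j * x"
  unfolding RR_def by (rule rootE_comm) auto

lemma assoc_rule: "a * b = (c::'a::ring_1) \<Longrightarrow> a * (b * z) = c * z"
  by (simp add: mult.assoc[symmetric])


lemma up_induct[consumes 2, case_names base step]:
  assumes "a \<le> j" "j < b" "P a" "\<And>j. a \<le> j \<Longrightarrow> Suc j < b \<Longrightarrow> P j \<Longrightarrow> P (Suc j)"
  shows "P j"
  using assms(1,2)
proof (induction j)
  case 0 then show ?case using assms(3) by simp
next
  case (Suc j)
  show ?case
  proof (cases "a = Suc j")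
    case True then show ?thesis using assms(3) by simp
  next
    case False
    then have "a \<le> j" "j < b" using Suc.prems by auto
    then have "P j" using Suc.IH by blast
    then show ?thesis using assms(4) \<open>a \<le> j\<close> Suc.prems(2) by blast
  qed
qed

lemma down_induct[consumes 2, case_names base step]:
  assumes "lo \<le> i" "i \<le> b" "P b" "\<And>i. lo \<le> i \<Longrightarrow> i < b \<Longrightarrow> P (Suc i) \<Longrightarrow> P i"
  shows "P i"
proof -
  have "\<forall>i. lo \<le> i \<longrightarrow> i \<le> b \<longrightarrow> b - i = k \<longrightarrow> P i" for k
  proof (induction k)
    case 0 then show ?case using assms(3) by (auto simp: le_antisym)
  next
    case (Suc k)
    show ?case
    proof (intro allI impI)
      fix i assume h: "lo \<le> i" "i \<le> b" "b - i = Suc k"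
      then have "i < b" by simp
      moreover have "P (Suc i)" using Suc.IH h by (metis Suc_diff_Suc Suc_leI \<open>i < b\<close> diff_Suc_1 le_SucI nat.inject)
      ultimately show "P i" using assms(4) h(1) by blast
    qed
  qed
  then show ?thesis using assms(1,2) by blast
qed

locale gen =
  fixes v w u :: "'a::ring_1" and G :: "nat \<Rightarrow> 'a" and n m :: nat
  assumes vw: "v * w = 1" and wv: "w * v = 1"
    and cv: "\<And>x. v * x = x * v" and cw: "\<And>x. w * x = x * w" and cu: "\<And>x. u * x = x * u"
    and uvw: "u * (v + w) = 1"
    and far: "\<And>a b. 1 \<le> a \<Longrightarrow> a < n \<Longrightarrow> 1 \<le> b \<Longrightarrow> b < n \<Longrightarrow> a + 1 < b \<or> b + 1 < a \<Longrightarrow> G a * G b = G b * G a"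
    and serre: "\<And>a b. 1 \<le> a \<Longrightarrow> a < n \<Longrightarrow> 1 \<le> b \<Longrightarrow> b < n \<Longrightarrow> a = b + 1 \<or> b = a + 1 \<Longrightarrow> a \<noteq> m \<Longrightarrow>
        G a * G a * G b - (v + w) * G a * G b * G a + G b * G a * G a = 0"
begin

abbreviation R where "R \<equiv> RR w G"

lemma sc:
  "G a * (v * y) = v * (G a * y)" "G a * v = v * G a"
  "G a * (w * y) = w * (G a * y)" "G a * w = w * G a"
  "RR w H i j * (v * y) = v * (RR w H i j * y)" "RR w H i j * v = v * RR w H i j"
  "RR w H i j * (w * y) = w * (RR w H i j * y)" "RR w H i j * w = w * RR w H i j"
  using cv cw by (metis mult.assoc)+

lemma vw2: "v * (w * x) = x" "w * (v * x) = x" by (simp_all add: mult.assoc[symmetric] vw wv)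

lemmas ss = algebra_simps sc vw2

lemma wcomm: "w * y = y * w" using cw by simp

lemma R_left:
  assumes i1: "1 \<le> i" and ij: "Suc (Suc i) \<le> j" and jn: "j \<le> n"
  shows "R i j = w * (R (Suc i) j * G i) - G i * R (Suc i) j"
  using ij le_imp_less_Suc[OF jn]
proof (induction j rule: up_induct)
  case base
  have "R i (Suc (Suc i)) = w * (G (Suc i) * R i (Suc i)) - R i (Suc i) * G (Suc i)" by (rule RR_rec) simp
  then show ?case by (simp only: RR_1)
next
  case (step j)
  have f: "G i * G j = G j * G i" using step i1 by (intro far) auto
  have r1: "R i (Suc j) = w * (G j * R i j) - R i j * G j" using step(1) by (intro RR_rec) simp
  have r2: "R (Suc i) (Suc j) = w * (G j * R (Suc i) j) - R (Suc i) j * G j" using step(1) by (intro RR_rec) simp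
  show ?case unfolding r1 r2 step(3) by (simp add: ss f f[THEN assoc_rule])
qed

lemma G_far_R: "1 \<le> i \<Longrightarrow> i < j \<Longrightarrow> j \<le> n \<Longrightarrow> 1 \<le> b \<Longrightarrow> b < n \<Longrightarrow> b + 1 < i \<or> j < b \<Longrightarrow> G b * R i j = R i j * G b"
  by (rule RR_comm) (auto intro!: far intro: wcomm)

lemma serre_right:
  assumes i1: "1 \<le> i" and ij: "i < j" and jn: "j < n" and mj: "m \<noteq> j"
  shows "G j * G j * R i j - (v + w) * G j * R i j * G j + R i j * G j * G j = 0"
proof -
  have "i \<le> j - 1" using ij by simp
  from i1 this show ?thesis
proof (induction i rule: down_induct)
  case base
  obtain jj where jj: "j = Suc jj" using ij by (cases j) auto
  have "G j * G j * G jj - (v + w) * G j * G jj * G j + G jj * G j * G j = 0"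
    using ij jn mj jj i1 by (intro serre) auto
  then show ?case using jj by simp
next
  case (step i)
  have f: "G i * G j = G j * G i" using step jn by (intro far) auto
  have l: "R i j = w * (R (Suc i) j * G i) - G i * R (Suc i) j" using step jn by (intro R_left) auto
  have ih: "G j * G j * R (Suc i) j - (v + w) * G j * R (Suc i) j * G j + R (Suc i) j * G j * G j = 0"
    using step by auto
  have "G j * G j * R i j - (v + w) * G j * R i j * G j + R i j * G j * G j =
     w * ((G j * G j * R (Suc i) j - (v + w) * G j * R (Suc i) j * G j + R (Suc i) j * G j * G j) * G i)
     - G i * (G j * G j * R (Suc i) j - (v + w) * G j * R (Suc i) j * G j + R (Suc i) j * G j * G j)"
    by (simp add: l ss f f[THEN assoc_rule])
  then show ?case using ih by simp
qed
qed


lemma by_diff: "(x::'a) - y = z \<Longrightarrow> z = 0 \<Longrightarrow> x = y" by simp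

lemma R_last:
  assumes i1: "1 \<le> i" and ij: "i < j" and jn: "j < n" and mj: "m \<noteq> j"
  shows "R i (Suc j) * G j = v * (G j * R i (Suc j))"
proof (rule by_diff)
  have S: "G j * G j * R i j - (v + w) * G j * R i j * G j + R i j * G j * G j = 0"
    using assms by (rule serre_right)
  have r: "R i (Suc j) = w * (G j * R i j) - R i j * G j" using ij by (rule RR_rec)
  show "R i (Suc j) * G j - v * (G j * R i (Suc j)) = - (G j * G j * R i j - (v + w) * G j * R i j * G j + R i j * G j * G j)"
    unfolding r by (simp add: ss)
  show "- (G j * G j * R i j - (v + w) * G j * R i j * G j + R i j * G j * G j) = 0"
    by (simp only: S minus_zero)
qed

lemma serre_left:
  assumes i1: "1 \<le> i" and ij: "Suc (Suc i) \<le> j" and jn: "j \<le> n" and mi: "m \<noteq> i"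
  shows "G i * G i * R (Suc i) j - (v + w) * G i * R (Suc i) j * G i + R (Suc i) j * G i * G i = 0"
  using ij le_imp_less_Suc[OF jn]
proof (induction j rule: up_induct)
  case base
  have "G i * G i * G (Suc i) - (v + w) * G i * G (Suc i) * G i + G (Suc i) * G i * G i = 0"
    using i1 jn ij mi by (intro serre) auto
  then show ?case by simp
next
  case (step j)
  have f: "G i * G j = G j * G i" using step i1 by (intro far) auto
  have r: "R (Suc i) (Suc j) = w * (G j * R (Suc i) j) - R (Suc i) j * G j" using step(1) by (intro RR_rec) simp
  show ?case
  proof (rule by_diff)
    show "G i * G i * R (Suc i) (Suc j) - (v + w) * G i * R (Suc i) (Suc j) * G i + R (Suc i) (Suc j) * G i * G i - 0
      = w * (G j * (G i * G i * R (Suc i) j - (v + w) * G i * R (Suc i) j * G i + R (Suc i) j * G i * G i))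
        - (G i * G i * R (Suc i) j - (v + w) * G i * R (Suc i) j * G i + R (Suc i) j * G i * G i) * G j"
      unfolding r by (simp add: ss f f[THEN assoc_rule])
    show "w * (G j * (G i * G i * R (Suc i) j - (v + w) * G i * R (Suc i) j * G i + R (Suc i) j * G i * G i))
        - (G i * G i * R (Suc i) j - (v + w) * G i * R (Suc i) j * G i + R (Suc i) j * G i * G i) * G j = 0"
      by (simp only: step(3) mult_zero_left mult_zero_right diff_zero)
  qed
qed

lemma G_first:
  assumes i1: "1 \<le> i" and ij: "Suc (Suc i) \<le> j" and jn: "j \<le> n" and mi: "m \<noteq> i"
  shows "G i * R i j = v * (R i j * G i)"
proof (rule by_diff)
  have S: "G i * G i * R (Suc i) j - (v + w) * G i * R (Suc i) j * G i + R (Suc i) j * G i * G i = 0"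
    using assms by (rule serre_left)
  have l: "R i j = w * (R (Suc i) j * G i) - G i * R (Suc i) j" using i1 ij jn by (rule R_left)
  show "G i * R i j - v * (R i j * G i) = - (G i * G i * R (Suc i) j - (v + w) * G i * R (Suc i) j * G i + R (Suc i) j * G i * G i)"
    unfolding l by (simp add: ss)
  show "- (G i * G i * R (Suc i) j - (v + w) * G i * R (Suc i) j * G i + R (Suc i) j * G i * G i) = 0"
    by (simp only: S minus_zero)
qed

lemma uvw_cancel: "(v + w) * x = 0 \<Longrightarrow> x = 0"
proof -
  assume "(v + w) * x = 0"
  then have "u * ((v + w) * x) = 0" by simp
  then show "x = 0" by (simp add: mult.assoc[symmetric] uvw)
qed

lemma f0:
  assumes a1: "1 \<le> a" and an: "Suc (Suc (Suc a)) \<le> n" and ma: "m \<noteq> Suc a"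
  shows "G (Suc a) * R a (Suc (Suc (Suc a))) = R a (Suc (Suc (Suc a))) * G (Suc a)"
proof -
  have r3: "R a (Suc (Suc (Suc a))) = w * (G (Suc (Suc a)) * R a (Suc (Suc a))) - R a (Suc (Suc a)) * G (Suc (Suc a))"
    by (rule RR_rec) simp
  have r2: "R a (Suc (Suc a)) = w * (G (Suc a) * G a) - G a * G (Suc a)"
    using RR_rec[of a "Suc a" w G] by simp
  have z1: "G (Suc a) * G (Suc a) * G (Suc (Suc a)) - (v + w) * G (Suc a) * G (Suc (Suc a)) * G (Suc a) + G (Suc (Suc a)) * G (Suc a) * G (Suc a) = 0" using assms by (intro serre) auto
  have z2: "G (Suc a) * G (Suc a) * G a - (v + w) * G (Suc a) * G a * G (Suc a) + G a * G (Suc a) * G (Suc a) = 0" using assms by (intro serre) auto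
  have z3: "G a * G (Suc (Suc a)) - G (Suc (Suc a)) * G a = 0" using assms far[of a "Suc (Suc a)"] by auto
  have "(v + w) * (G (Suc a) * R a (Suc (Suc (Suc a))) - R a (Suc (Suc (Suc a))) * G (Suc a)) = (- 1) * ((G a * G (Suc (Suc a)) - G (Suc (Suc a)) * G a) * G (Suc a) * G (Suc a)) + (w * w + 1) * (G (Suc a) * (G a * G (Suc (Suc a)) - G (Suc (Suc a)) * G a) * G (Suc a)) + (- w * w) * (G (Suc a) * G (Suc a) * (G a * G (Suc (Suc a)) - G (Suc (Suc a)) * G a)) + (- 1) * ((G (Suc a) * G (Suc a) * G a - (v + w) * G (Suc a) * G a * G (Suc a) + G a * G (Suc a) * G (Suc a)) * G (Suc (Suc a))) + (w * w) * (G (Suc (Suc a)) * (G (Suc a) * G (Suc a) * G a - (v + w) * G (Suc a) * G a * G (Suc a) + G a * G (Suc a) * G (Suc a))) + (- w * w) * ((G (Suc a) * G (Suc a) * G (Suc (Suc a)) - (v + w) * G (Suc a) * G (Suc (Suc a)) * G (Suc a) + G (Suc (Suc a)) * G (Suc a) * G (Suc a)) * G a) + (1) * (G a * (G (Suc a) * G (Suc a) * G (Suc (Suc a)) - (v + w) * G (Suc a) * G (Suc (Suc a)) * G (Suc a) + G (Suc (Suc a)) * G (Suc a) * G (Suc a)))"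
    unfolding r3 r2 by (simp add: ss)
  also have "(- 1) * ((G a * G (Suc (Suc a)) - G (Suc (Suc a)) * G a) * G (Suc a) * G (Suc a)) + (w * w + 1) * (G (Suc a) * (G a * G (Suc (Suc a)) - G (Suc (Suc a)) * G a) * G (Suc a)) + (- w * w) * (G (Suc a) * G (Suc a) * (G a * G (Suc (Suc a)) - G (Suc (Suc a)) * G a)) + (- 1) * ((G (Suc a) * G (Suc a) * G a - (v + w) * G (Suc a) * G a * G (Suc a) + G a * G (Suc a) * G (Suc a)) * G (Suc (Suc a))) + (w * w) * (G (Suc (Suc a)) * (G (Suc a) * G (Suc a) * G a - (v + w) * G (Suc a) * G a * G (Suc a) + G a * G (Suc a) * G (Suc a))) + (- w * w) * ((G (Suc a) * G (Suc a) * G (Suc (Suc a)) - (v + w) * G (Suc a) * G (Suc (Suc a)) * G (Suc a) + G (Suc (Suc a)) * G (Suc a) * G (Suc a)) * G a) + (1) * (G a * (G (Suc a) * G (Suc a) * G (Suc (Suc a)) - (v + w) * G (Suc a) * G (Suc (Suc a)) * G (Suc a) + G (Suc (Suc a)) * G (Suc a) * G (Suc a))) = 0"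
    by (simp only: z1 z2 z3 mult_zero_left mult_zero_right add_0_left add_0_right diff_zero)
  finally have "(v + w) * (G (Suc a) * R a (Suc (Suc (Suc a))) - R a (Suc (Suc (Suc a))) * G (Suc a)) = 0" .
  from uvw_cancel[OF this] show ?thesis by simp
qed


lemma G_mid:
  assumes i1: "1 \<le> i" and ia: "i < a" and aj: "Suc a < j" and jn: "j \<le> n" and ma: "m \<noteq> a"
  shows "G a * R i j = R i j * G a"
proof -
  have hbase: "G a * R i (Suc (Suc a)) = R i (Suc (Suc a)) * G a"
  proof -
    obtain b where b: "a = Suc b" using ia by (cases a) auto
    have "i \<le> b" using ia b by simp
    from i1 this show ?thesis
    proof (induction i rule: down_induct)
      case base
      have "G (Suc b) * R b (Suc (Suc (Suc b))) = R b (Suc (Suc (Suc b))) * G (Suc b)"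
        using i1 ia b aj jn ma by (intro f0) auto
      then show ?case using b by simp
    next
      case (step i)
      have f: "G a * G i = G i * G a" using step aj jn b by (intro far) auto
      have l: "R i (Suc (Suc a)) = w * (R (Suc i) (Suc (Suc a)) * G i) - G i * R (Suc i) (Suc (Suc a))"
        using step b aj jn by (intro R_left) auto
      show ?case unfolding l by (simp add: ss f f[THEN assoc_rule] step(3) step(3)[THEN assoc_rule])
    qed
  qed
  have "Suc (Suc a) \<le> j" using aj by simp
  from this le_imp_less_Suc[OF jn] show ?thesis
  proof (induction j rule: up_induct)
    case base show ?case by (rule hbase)
  next
    case (step j)
    have f: "G a * G j = G j * G a" using step ia i1 by (intro far) auto
    have r: "R i (Suc j) = w * (G j * R i j) - R i j * G j" using step(1) ia by (intro RR_rec) simp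
    show ?case unfolding r by (simp add: ss f f[THEN assoc_rule] step(3) step(3)[THEN assoc_rule])
  qed
qed

lemma EE2:
  assumes i1: "1 \<le> i" and ij: "i < j" and jl: "j < l" and ln: "l \<le> n"
  shows "R i j * R j l = w * (R j l * R i j) - R i l"
proof -
  have "Suc j \<le> l" using jl by simp
  from this le_imp_less_Suc[OF ln] show ?thesis
  proof (induction l rule: up_induct)
    case base
    have "R i (Suc j) = w * (G j * R i j) - R i j * G j" using ij by (rule RR_rec)
    then show ?case by simp
  next
    case (step l)
    have c: "R i j * G l = G l * R i j" using step i1 ij by (intro G_far_R[symmetric]) auto
    have r1: "R j (Suc l) = w * (G l * R j l) - R j l * G l" using step(1) by (intro RR_rec) simp
    have r2: "R i (Suc l) = w * (G l * R i l) - R i l * G l" using step(1) ij by (intro RR_rec) simp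
    show ?case unfolding r1 r2 by (simp add: ss c c[THEN assoc_rule] step(3) step(3)[THEN assoc_rule])
  qed
qed

lemma EE4:
  assumes i1: "1 \<le> i" and ij: "i < j" and jl: "j < l" and ln: "l \<le> n" and mc: "m < i \<or> j \<le> m"
  shows "R i j * R i l = v * (R i l * R i j)"
proof -
  have "Suc i \<le> j" using ij by simp
  from this le_imp_less_Suc[OF order.refl] show ?thesis
  proof (induction j rule: up_induct)
    case base
    have "G i * R i l = v * (R i l * G i)" using i1 ij jl ln mc by (intro G_first) auto
    then show ?case by simp
  next
    case (step j')
    have c: "G j' * R i l = R i l * G j'" using step i1 jl ln mc by (intro G_mid) auto
    have r: "R i (Suc j') = w * (G j' * R i j') - R i j' * G j'" using step(1) by (intro RR_rec) simp
    show ?case unfolding r by (simp add: ss c c[THEN assoc_rule] step(3) step(3)[THEN assoc_rule])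
  qed
qed


lemma EE5:
  assumes i1: "1 \<le> i" and ik: "i < k" and kj: "k < j" and jn: "j \<le> n" and mc: "m < k \<or> j \<le> m"
  shows "R i j * R k j = v * (R k j * R i j)"
proof -
  obtain jj where jj: "j = Suc jj" using kj by (cases j) auto
  have "k \<le> jj" using kj jj by simp
  from order.refl this show ?thesis
  proof (induction k rule: down_induct)
    case base
    have "R i (Suc jj) * G jj = v * (G jj * R i (Suc jj))" using i1 ik kj jn mc jj by (intro R_last) auto
    then show ?case using jj by simp
  next
    case (step k')
    have c: "R i j * G k' = G k' * R i j" using step i1 ik kj jn mc jj by (intro G_mid[symmetric]) auto
    have l: "R k' j = w * (R (Suc k') j * G k') - G k' * R (Suc k') j"
      using step i1 ik jj jn by (intro R_left) auto
    show ?case unfolding l by (simp add: ss c c[THEN assoc_rule] step(3) step(3)[THEN assoc_rule])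
  qed
qed

lemma EE6:
  assumes i1: "1 \<le> i" and ik: "i < k" and kl: "k < l" and lj: "l < j" and jn: "j \<le> n" and mc: "m < k \<or> l \<le> m"
  shows "R i j * R k l = R k l * R i j"
proof -
  have "Suc k \<le> l" using kl by simp
  from this le_imp_less_Suc[OF order.refl] show ?thesis
  proof (induction l rule: up_induct)
    case base
    have "G k * R i j = R i j * G k" using i1 ik kl lj jn mc by (intro G_mid) auto
    then show ?case by simp
  next
    case (step l')
    have c: "R i j * G l' = G l' * R i j" using step i1 ik kl lj jn mc by (intro G_mid[symmetric]) auto
    have r: "R k (Suc l') = w * (G l' * R k l') - R k l' * G l'" using step(1) by (intro RR_rec) simp
    show ?case unfolding r by (simp add: ss c c[THEN assoc_rule] step(3) step(3)[THEN assoc_rule])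
  qed
qed

lemma EE7:
  assumes i1: "1 \<le> i" and ik: "i < k" and kj: "k < j" and jl: "j < l" and ln: "l \<le> n" and mc: "m < k \<or> j \<le> m"
  shows "R i j * R k l = R k l * R i j + (v - w) * (R i l * R k j)"
proof -
  have "Suc j \<le> l" using jl by simp
  from this le_imp_less_Suc[OF ln] show ?thesis
  proof (induction l rule: up_induct)
    case base
    have r1: "R k (Suc j) = w * (G j * R k j) - R k j * G j" using kj by (rule RR_rec)
    have b: "R i j * G j = w * (G j * R i j) - R i (Suc j)" using RR_rec[of i j w G] ik kj by simp
    have e5: "R i j * R k j = v * (R k j * R i j)" using assms by (intro EE5) auto
    have e6: "R k j * R i (Suc j) = R i (Suc j) * R k j" using assms by (intro EE6[symmetric]) auto
    show ?case unfolding r1 by (simp add: ss b b[THEN assoc_rule] e5 e5[THEN assoc_rule] e6 e6[THEN assoc_rule])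
  next
    case (step l')
    have c1: "R i j * G l' = G l' * R i j" using step i1 ik kj by (intro G_far_R[symmetric]) auto
    have c2: "R k j * G l' = G l' * R k j" using step i1 ik kj by (intro G_far_R[symmetric]) auto
    have r1: "R k (Suc l') = w * (G l' * R k l') - R k l' * G l'" using step(1) kj by (intro RR_rec) simp
    have r2: "R i (Suc l') = w * (G l' * R i l') - R i l' * G l'" using step(1) ik kj by (intro RR_rec) simp
    show ?case unfolding r1 r2
      by (simp add: ss c1 c1[THEN assoc_rule] c2 c2[THEN assoc_rule] step(3) step(3)[THEN assoc_rule])
  qed
qed

end

lemma eq_diff0: "(a::'a::ring_1) = b \<Longrightarrow> a - b = 0" by simp

locale qq =
  fixes v w u :: "'a::ring_1" and E Eb :: "nat \<Rightarrow> 'a" and n :: nat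
  assumes vw: "v * w = 1" and wv: "w * v = 1"
    and cv: "\<And>x. v * x = x * v" and cw: "\<And>x. w * x = x * w" and cu: "\<And>x. u * x = x * u"
    and uvw: "u * (v + w) = 1"
    and farEE: "\<And>a b. 1 \<le> a \<Longrightarrow> a < n \<Longrightarrow> 1 \<le> b \<Longrightarrow> b < n \<Longrightarrow> a + 1 < b \<or> b + 1 < a \<Longrightarrow> E a * E b = E b * E a"
    and farEEb: "\<And>a b. 1 \<le> a \<Longrightarrow> a < n \<Longrightarrow> 1 \<le> b \<Longrightarrow> b < n \<Longrightarrow> \<not> (a = b + 1 \<or> b = a + 1) \<Longrightarrow> E a * Eb b = Eb b * E a"
    and serreE: "\<And>a b. 1 \<le> a \<Longrightarrow> a < n \<Longrightarrow> 1 \<le> b \<Longrightarrow> b < n \<Longrightarrow> a = b + 1 \<or> b = a + 1 \<Longrightarrow>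
        E a * E a * E b - (v + w) * E a * E b * E a + E b * E a * E a = 0"
    and serreEb: "\<And>a b. 1 \<le> a \<Longrightarrow> a < n \<Longrightarrow> 1 \<le> b \<Longrightarrow> b < n \<Longrightarrow> a = b + 1 \<or> b = a + 1 \<Longrightarrow>
        E a * E a * Eb b - (v + w) * E a * Eb b * E a + Eb b * E a * E a = 0"
    and q5h: "\<And>a. 1 \<le> a \<Longrightarrow> a + 1 < n \<Longrightarrow>
        E a * Eb (a + 1) - v * Eb (a + 1) * E a = Eb a * E (a + 1) - v * E (a + 1) * Eb a"
begin

lemma genE: "gen v w u E n 0"
  by (unfold_locales) (auto intro: vw wv cv cw cu uvw farEE serreE)

lemma genB: assumes p1: "1 \<le> p" and pn: "p < n" shows "gen v w u (E(p := Eb p)) n p"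
proof (unfold_locales)
  show "v * w = 1" "w * v = 1" "\<And>x. v * x = x * v" "\<And>x. w * x = x * w" "\<And>x. u * x = x * u" "u * (v + w) = 1"
    by (auto intro: vw wv cv cw cu uvw)
next
  fix a b assume h: "1 \<le> a" "a < n" "1 \<le> b" "b < n" "a + 1 < b \<or> b + 1 < a"
  show "(E(p := Eb p)) a * (E(p := Eb p)) b = (E(p := Eb p)) b * (E(p := Eb p)) a"
  proof (cases "a = p")
    case True
    then have "b \<noteq> p" using h by auto
    then show ?thesis using True h farEEb[of b a] by auto
  next
    case False
    then show ?thesis using h farEE[of a b] farEEb[of a b] by auto
  qed
next
  fix a b assume h: "1 \<le> a" "a < n" "1 \<le> b" "b < n" "a = b + 1 \<or> b = a + 1" "a \<noteq> p"
  show "(E(p := Eb p)) a * (E(p := Eb p)) a * (E(p := Eb p)) b - (v + w) * (E(p := Eb p)) a * (E(p := Eb p)) b * (E(p := Eb p)) a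
     + (E(p := Eb p)) b * (E(p := Eb p)) a * (E(p := Eb p)) a = 0"
    using h serreE[of a b] serreEb[of a b] by auto
qed

abbreviation R where "R \<equiv> RR w E"

definition B where "B k l = RR w (E(l - 1 := Eb (l - 1))) k l"

lemma sc:
  "E a * (v * y) = v * (E a * y)" "E a * v = v * E a"
  "E a * (w * y) = w * (E a * y)" "E a * w = w * E a"
  "Eb a * (v * y) = v * (Eb a * y)" "Eb a * v = v * Eb a"
  "Eb a * (w * y) = w * (Eb a * y)" "Eb a * w = w * Eb a"
  "RR w H i j * (v * y) = v * (RR w H i j * y)" "RR w H i j * v = v * RR w H i j"
  "RR w H i j * (w * y) = w * (RR w H i j * y)" "RR w H i j * w = w * RR w H i j"
  "B i j * (v * y) = v * (B i j * y)" "B i j * v = v * B i j"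
  "B i j * (w * y) = w * (B i j * y)" "B i j * w = w * B i j"
  using cv cw by (metis mult.assoc)+

lemma vw2: "v * (w * x) = x" "w * (v * x) = x" by (simp_all add: mult.assoc[symmetric] vw wv)

lemmas ss = algebra_simps sc vw2

lemma wcomm: "w * y = y * w" using cw by simp

lemma vw_flip: "a = v * b \<Longrightarrow> b = w * a" by (simp add: vw2)

lemma uvw_cancel: "(v + w) * x = 0 \<Longrightarrow> x = 0"
proof -
  assume "(v + w) * x = 0"
  then have "u * ((v + w) * x) = 0" by simp
  then show "x = 0" by (simp add: mult.assoc[symmetric] uvw)
qed

lemma B_1[simp]: "B k (Suc k) = Eb k" by (simp add: B_def)

lemma RB_eq: "i < j \<Longrightarrow> p < i \<or> j \<le> p \<Longrightarrow> RR w (E(p := Eb p)) i j = R i j"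
  by (rule RR_local) auto

lemma B_eq: "RR w (E(p := Eb p)) k (Suc p) = B k (Suc p)" by (simp add: B_def)

lemma B_rec: assumes "k < l" shows "B k (Suc l) = w * (Eb l * R k l) - R k l * Eb l"
proof -
  have "B k (Suc l) = w * ((E(l := Eb l)) l * RR w (E(l := Eb l)) k l) - RR w (E(l := Eb l)) k l * (E(l := Eb l)) l"
    unfolding B_def using assms by (simp add: RR_rec)
  then show ?thesis using RB_eq[of k l l] assms by simp
qed

lemma R_left: "1 \<le> i \<Longrightarrow> Suc (Suc i) \<le> j \<Longrightarrow> j \<le> n \<Longrightarrow> R i j = w * (R (Suc i) j * E i) - E i * R (Suc i) j"
  by (rule gen.R_left[OF genE])

lemma B_left:
  assumes i1: "1 \<le> i" and ij: "Suc (Suc i) \<le> j" and jn: "j \<le> n"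
  shows "B i j = w * (B (Suc i) j * E i) - E i * B (Suc i) j"
proof -
  obtain jj where jj: "j = Suc jj" using ij by (cases j) auto
  have "RR w (E(jj := Eb jj)) i j = w * (RR w (E(jj := Eb jj)) (Suc i) j * (E(jj := Eb jj)) i) - (E(jj := Eb jj)) i * RR w (E(jj := Eb jj)) (Suc i) j"
    using i1 ij jn jj by (intro gen.R_left[OF genB]) auto
  moreover have "(E(jj := Eb jj)) i = E i" using ij jj by auto
  ultimately show ?thesis using jj by (simp add: B_def)
qed


lemma GBa_base:
  assumes a1: "1 \<le> a" and an: "Suc (Suc a) \<le> n"
  shows "R a (Suc (Suc a)) * Eb a = w * (Eb a * R a (Suc (Suc a)))"
proof -
  have r2: "R a (Suc (Suc a)) = w * (E (Suc a) * E a) - E a * E (Suc a)"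
    using RR_rec[of a "Suc a" w E] by simp
  have z0: "E a * E a * Eb (Suc a) - (v + w) * E a * Eb (Suc a) * E a + Eb (Suc a) * E a * E a = 0" using assms by (intro serreEb) auto
  have z1: "E a * Eb (Suc a) - v * Eb (Suc a) * E a - (Eb a * E (Suc a) - v * E (Suc a) * Eb a) = 0" using assms q5h[of "a"] by simp
  have z2: "E a * Eb a - Eb a * E a = 0" using assms by (simp add: farEEb)
  have "R a (Suc (Suc a)) * Eb a - w * (Eb a * R a (Suc (Suc a))) = (- w) * ((E a * Eb a - Eb a * E a) * E (Suc a)) + (w) * (E (Suc a) * (E a * Eb a - Eb a * E a)) + (w) * ((E a * E a * Eb (Suc a) - (v + w) * E a * Eb (Suc a) * E a + Eb (Suc a) * E a * E a)) + (w * w) * ((E a * Eb (Suc a) - v * Eb (Suc a) * E a - (Eb a * E (Suc a) - v * E (Suc a) * Eb a)) * E a) + (- w) * (E a * (E a * Eb (Suc a) - v * Eb (Suc a) * E a - (Eb a * E (Suc a) - v * E (Suc a) * Eb a)))"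
    unfolding r2 by (simp add: ss)
  also have "(- w) * ((E a * Eb a - Eb a * E a) * E (Suc a)) + (w) * (E (Suc a) * (E a * Eb a - Eb a * E a)) + (w) * ((E a * E a * Eb (Suc a) - (v + w) * E a * Eb (Suc a) * E a + Eb (Suc a) * E a * E a)) + (w * w) * ((E a * Eb (Suc a) - v * Eb (Suc a) * E a - (Eb a * E (Suc a) - v * E (Suc a) * Eb a)) * E a) + (- w) * (E a * (E a * Eb (Suc a) - v * Eb (Suc a) * E a - (Eb a * E (Suc a) - v * E (Suc a) * Eb a))) = 0"
    by (simp only: z0 z1 z2 mult_zero_left mult_zero_right add_0_left add_0_right diff_zero)
  finally have "R a (Suc (Suc a)) * Eb a - w * (Eb a * R a (Suc (Suc a))) = 0" .
  then show ?thesis by simp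
qed


lemma GBa:
  assumes i1: "1 \<le> i" and ij: "Suc (Suc i) \<le> j" and jn: "j \<le> n"
  shows "R i j * Eb i = w * (Eb i * R i j)"
  using ij le_imp_less_Suc[OF jn]
proof (induction j rule: up_induct)
  case base show ?case using i1 jn ij by (intro GBa_base) auto
next
  case (step j)
  have f: "E j * Eb i = Eb i * E j" using step i1 by (intro farEEb) auto
  have r: "R i (Suc j) = w * (E j * R i j) - R i j * E j" using step(1) by (intro RR_rec) simp
  show ?case unfolding r by (simp add: ss f f[THEN assoc_rule] step(3) step(3)[THEN assoc_rule])
qed

lemma GBb_base:
  assumes a1: "1 \<le> a" and an: "Suc (Suc (Suc a)) \<le> n"
  shows "R a (Suc (Suc (Suc a))) * Eb (Suc a) = Eb (Suc a) * R a (Suc (Suc (Suc a)))"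
proof -
  have r3: "R a (Suc (Suc (Suc a))) = w * (E (Suc (Suc a)) * R a (Suc (Suc a))) - R a (Suc (Suc a)) * E (Suc (Suc a))"
    by (rule RR_rec) simp
  have r2: "R a (Suc (Suc a)) = w * (E (Suc a) * E a) - E a * E (Suc a)"
    using RR_rec[of a "Suc a" w E] by simp
  have z0: "E (Suc a) * E (Suc a) * E a - (v + w) * E (Suc a) * E a * E (Suc a) + E a * E (Suc a) * E (Suc a) = 0" using assms by (intro serreE) auto
  have z1: "E (Suc a) * E (Suc a) * Eb (Suc (Suc a)) - (v + w) * E (Suc a) * Eb (Suc (Suc a)) * E (Suc a) + Eb (Suc (Suc a)) * E (Suc a) * E (Suc a) = 0" using assms by (intro serreEb) auto
  have z2: "E (Suc a) * E (Suc a) * Eb a - (v + w) * E (Suc a) * Eb a * E (Suc a) + Eb a * E (Suc a) * E (Suc a) = 0" using assms by (intro serreEb) auto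
  have z3: "E (Suc a) * Eb (Suc (Suc a)) - v * Eb (Suc (Suc a)) * E (Suc a) - (Eb (Suc a) * E (Suc (Suc a)) - v * E (Suc (Suc a)) * Eb (Suc a)) = 0" using assms q5h[of "(Suc a)"] by simp
  have z4: "E (Suc a) * Eb (Suc a) - Eb (Suc a) * E (Suc a) = 0" using assms by (simp add: farEEb)
  have z5: "E a * E (Suc (Suc a)) - E (Suc (Suc a)) * E a = 0" using assms by (simp add: farEE)
  have z6: "E a * Eb (Suc (Suc a)) - Eb (Suc (Suc a)) * E a = 0" using assms by (simp add: farEEb)
  have z7: "E a * Eb (Suc a) - v * Eb (Suc a) * E a - (Eb a * E (Suc a) - v * E (Suc a) * Eb a) = 0" using assms q5h[of "a"] by simp
  have "(v + w) * (R a (Suc (Suc (Suc a))) * Eb (Suc a) - Eb (Suc a) * R a (Suc (Suc (Suc a)))) = (1) * ((E a * Eb (Suc (Suc a)) - Eb (Suc (Suc a)) * E a) * E (Suc a) * E (Suc a)) + (- w * w - 1) * (E (Suc a) * (E a * Eb (Suc (Suc a)) - Eb (Suc (Suc a)) * E a) * E (Suc a)) + (w * w) * (E (Suc a) * E (Suc a) * (E a * Eb (Suc (Suc a)) - Eb (Suc (Suc a)) * E a)) + (- w * w - 1) * ((E a * E (Suc (Suc a)) - E (Suc (Suc a)) * E a) * Eb (Suc a) * E (Suc a)) + (w * w + 1) * ((E a * E (Suc (Suc a)) - E (Suc (Suc a)) * E a) * E (Suc a) * Eb (Suc a)) + (w * w + 1) * ((E a * Eb (Suc a) - v * Eb (Suc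 a) * E a - (Eb a * E (Suc a) - v * E (Suc a) * Eb a)) * E (Suc a) * E (Suc (Suc a))) + (- w * w * w - w) * (E (Suc a) * (E a * Eb (Suc a) - v * Eb (Suc a) * E a - (Eb a * E (Suc a) - v * E (Suc a) * Eb a)) * E (Suc (Suc a))) + (- w * w - 1) * (E (Suc (Suc a)) * (E a * Eb (Suc a) - v * Eb (Suc a) * E a - (Eb a * E (Suc a) - v * E (Suc a) * Eb a)) * E (Suc a)) + (w * w * w + w) * (E (Suc (Suc a)) * E (Suc a) * (E a * Eb (Suc a) - v * Eb (Suc a) * E a - (Eb a * E (Suc a) - v * E (Suc a) * Eb a))) + (- w * w) * ((E (Suc a) * E (Suc a) * E a - (v + w) * E (Suc a) * E a * E (Suc a) + E a * E (Suc a) * E (Suc a)) * Eb (Suc (Suc a))) + (1) * (Eb (Suc (Suc a)) * (E (Suc a) * E (Suc a) * E a - (v + w) * E (Suc a) * E a * E (Suc a) + E a * E (Suc a) * E (Suc a))) + (w * w + 1) * ((E (Suc a) * E (Suc a) * Eb a - (v + w) * E (Suc a) * Eb a * E (Suc a) + Eb a * E (Suc a) * E (Suc a)) * E (Suc (Suc a))) + (- w * w - 1) * (E (Suc (Suc a)) * (E (Suc a) * E (Suc a) * Eb a - (v + w) * E (Suc a) * Eb a * E (Suc a) + Eb a * E (Suc a) * E (Suc a))) + (- w * w - 1) * ((E (Suc a) * Eb (Suc a) - Eb (Suc a) * E (Suc a)) * E a * E (Suc (Suc a))) + (w * w + 1) * (E a * (E (Suc a) * Eb (Suc a) - Eb (Suc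 a) * E (Suc a)) * E (Suc (Suc a))) + (- w * w - 1) * (E a * E (Suc (Suc a)) * (E (Suc a) * Eb (Suc a) - Eb (Suc a) * E (Suc a))) + (w * w + 1) * (E (Suc (Suc a)) * (E (Suc a) * Eb (Suc a) - Eb (Suc a) * E (Suc a)) * E a) + (w * w) * ((E (Suc a) * E (Suc a) * Eb (Suc (Suc a)) - (v + w) * E (Suc a) * Eb (Suc (Suc a)) * E (Suc a) + Eb (Suc (Suc a)) * E (Suc a) * E (Suc a)) * E a) + (- 1) * (E a * (E (Suc a) * E (Suc a) * Eb (Suc (Suc a)) - (v + w) * E (Suc a) * Eb (Suc (Suc a)) * E (Suc a) + Eb (Suc (Suc a)) * E (Suc a) * E (Suc a))) + (- w * w - 1) * ((E (Suc a) * Eb (Suc (Suc a)) - v * Eb (Suc (Suc a)) * E (Suc a) - (Eb (Suc a) * E (Suc (Suc a)) - v * E (Suc (Suc a)) * Eb (Suc a))) * E a * E (Suc a)) + (w * w + 1) * (E a * E (Suc a) * (E (Suc a) * Eb (Suc (Suc a)) - v * Eb (Suc (Suc a)) * E (Suc a) - (Eb (Suc a) * E (Suc (Suc a)) - v * E (Suc (Suc a)) * Eb (Suc a)))) + (w * w * w + w) * ((E (Suc a) * Eb (Suc (Suc a)) - v * Eb (Suc (Suc a)) * E (Suc a) - (Eb (Suc a) * E (Suc (Suc a)) - v * E (Suc (Suc a)) * Eb (Suc a))) * E (Suc a) * E a) + (- w * w * w - w) * (E (Suc a) * E a * (E (Suc a) * Eb (Suc (Suc a)) - v * Eb (Suc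 (Suc a)) * E (Suc a) - (Eb (Suc a) * E (Suc (Suc a)) - v * E (Suc (Suc a)) * Eb (Suc a))))"
    unfolding r3 r2 by (simp add: ss)
  also have "(1) * ((E a * Eb (Suc (Suc a)) - Eb (Suc (Suc a)) * E a) * E (Suc a) * E (Suc a)) + (- w * w - 1) * (E (Suc a) * (E a * Eb (Suc (Suc a)) - Eb (Suc (Suc a)) * E a) * E (Suc a)) + (w * w) * (E (Suc a) * E (Suc a) * (E a * Eb (Suc (Suc a)) - Eb (Suc (Suc a)) * E a)) + (- w * w - 1) * ((E a * E (Suc (Suc a)) - E (Suc (Suc a)) * E a) * Eb (Suc a) * E (Suc a)) + (w * w + 1) * ((E a * E (Suc (Suc a)) - E (Suc (Suc a)) * E a) * E (Suc a) * Eb (Suc a)) + (w * w + 1) * ((E a * Eb (Suc a) - v * Eb (Suc a) * E a - (Eb a * E (Suc a) - v * E (Suc a) * Eb a)) * E (Suc a) * E (Suc (Suc a))) + (- w * w * w - w) * (E (Suc a) * (E a * Eb (Suc a) - v * Eb (Suc a) * E a - (Eb a * E (Suc a) - v * E (Suc a) * Eb a)) * E (Suc (Suc a))) + (- w * w - 1) * (E (Suc (Suc a)) * (E a * Eb (Suc a) - v * Eb (Suc a) * E a - (Eb a * E (Suc a) - v * E (Suc a) * Eb a)) * E (Suc a)) + (w * w * w + w) * (E (Suc (Suc a)) * E (Suc a) * (E a * Eb (Suc a) - v * Eb (Suc a) * E a - (Eb a * E (Suc a) - v * E (Suc a) * Eb a))) + (- w * w) * ((E (Suc a) * E (Suc a)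 * E a - (v + w) * E (Suc a) * E a * E (Suc a) + E a * E (Suc a) * E (Suc a)) * Eb (Suc (Suc a))) + (1) * (Eb (Suc (Suc a)) * (E (Suc a) * E (Suc a) * E a - (v + w) * E (Suc a) * E a * E (Suc a) + E a * E (Suc a) * E (Suc a))) + (w * w + 1) * ((E (Suc a) * E (Suc a) * Eb a - (v + w) * E (Suc a) * Eb a * E (Suc a) + Eb a * E (Suc a) * E (Suc a)) * E (Suc (Suc a))) + (- w * w - 1) * (E (Suc (Suc a)) * (E (Suc a) * E (Suc a) * Eb a - (v + w) * E (Suc a) * Eb a * E (Suc a) + Eb a * E (Suc a) * E (Suc a))) + (- w * w - 1) * ((E (Suc a) * Eb (Suc a) - Eb (Suc a) * E (Suc a)) * E a * E (Suc (Suc a))) + (w * w + 1) * (E a * (E (Suc a) * Eb (Suc a) - Eb (Suc a) * E (Suc a)) * E (Suc (Suc a))) + (- w * w - 1) * (E a * E (Suc (Suc a)) * (E (Suc a) * Eb (Suc a) - Eb (Suc a) * E (Suc a))) + (w * w + 1) * (E (Suc (Suc a)) * (E (Suc a) * Eb (Suc a) - Eb (Suc a) * E (Suc a)) * E a) + (w * w) * ((E (Suc a) * E (Suc a) * Eb (Suc (Suc a)) - (v + w) * E (Suc a) * Eb (Suc (Suc a)) * E (Suc a) + Eb (Suc (Suc a)) * E (Suc a) * E (Suc a)) * E a) + (- 1) * (E a * (E (Suc a) * E (Suc a) * Eb (Suc (Suc a)) - (v + w) * E (Suc a) * Eb (Suc (Suc a)) * E (Suc a) + Eb (Suc (Suc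 a)) * E (Suc a) * E (Suc a))) + (- w * w - 1) * ((E (Suc a) * Eb (Suc (Suc a)) - v * Eb (Suc (Suc a)) * E (Suc a) - (Eb (Suc a) * E (Suc (Suc a)) - v * E (Suc (Suc a)) * Eb (Suc a))) * E a * E (Suc a)) + (w * w + 1) * (E a * E (Suc a) * (E (Suc a) * Eb (Suc (Suc a)) - v * Eb (Suc (Suc a)) * E (Suc a) - (Eb (Suc a) * E (Suc (Suc a)) - v * E (Suc (Suc a)) * Eb (Suc a)))) + (w * w * w + w) * ((E (Suc a) * Eb (Suc (Suc a)) - v * Eb (Suc (Suc a)) * E (Suc a) - (Eb (Suc a) * E (Suc (Suc a)) - v * E (Suc (Suc a)) * Eb (Suc a))) * E (Suc a) * E a) + (- w * w * w - w) * (E (Suc a) * E a * (E (Suc a) * Eb (Suc (Suc a)) - v * Eb (Suc (Suc a)) * E (Suc a) - (Eb (Suc a) * E (Suc (Suc a)) - v * E (Suc (Suc a)) * Eb (Suc a)))) = 0"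
    by (simp only: z0 z1 z2 z3 z4 z5 z6 z7 mult_zero_left mult_zero_right add_0_left add_0_right diff_zero)
  finally have "(v + w) * (R a (Suc (Suc (Suc a))) * Eb (Suc a) - Eb (Suc a) * R a (Suc (Suc (Suc a)))) = 0" .
  from uvw_cancel[OF this] show ?thesis by simp
qed

lemma GBb:
  assumes i1: "1 \<le> i" and ip: "i < p" and pj: "Suc p < j" and jn: "j \<le> n"
  shows "R i j * Eb p = Eb p * R i j"
proof -
  have hbase: "R i (Suc (Suc p)) * Eb p = Eb p * R i (Suc (Suc p))"
  proof -
    obtain b where b: "p = Suc b" using ip by (cases p) auto
    have "i \<le> b" using ip b by simp
    from i1 this show ?thesis
    proof (induction i rule: down_induct)
      case base
      have "R b (Suc (Suc (Suc b))) * Eb (Suc b) = Eb (Suc b) * R b (Suc (Suc (Suc b)))"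
        using i1 ip b pj jn by (intro GBb_base) auto
      then show ?case using b by simp
    next
      case (step i)
      have f: "E i * Eb p = Eb p * E i" using step pj jn b by (intro farEEb) auto
      have l: "R i (Suc (Suc p)) = w * (R (Suc i) (Suc (Suc p)) * E i) - E i * R (Suc i) (Suc (Suc p))"
        using step b pj jn by (intro R_left) auto
      show ?case unfolding l by (simp add: ss f f[THEN assoc_rule] step(3) step(3)[THEN assoc_rule])
    qed
  qed
  have "Suc (Suc p) \<le> j" using pj by simp
  from this le_imp_less_Suc[OF jn] show ?thesis
  proof (induction j rule: up_induct)
    case base show ?case by (rule hbase)
  next
    case (step j)
    have f: "E j * Eb p = Eb p * E j" using step ip i1 by (intro farEEb) auto
    have r: "R i (Suc j) = w * (E j * R i j) - R i j * E j" using step(1) ip by (intro RR_rec) simp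
    show ?case unfolding r by (simp add: ss f f[THEN assoc_rule] step(3) step(3)[THEN assoc_rule])
  qed
qed

lemma GBc_base:
  assumes a1: "1 \<le> a" and an: "Suc (Suc a) \<le> n"
  shows "R a (Suc (Suc a)) * Eb (Suc a) = w * (Eb (Suc a) * R a (Suc (Suc a))) + B a (Suc (Suc a)) * E (Suc a) - w * (E (Suc a) * B a (Suc (Suc a)))"
proof -
  have r2: "R a (Suc (Suc a)) = w * (E (Suc a) * E a) - E a * E (Suc a)"
    using RR_rec[of a "Suc a" w E] by simp
  have b2: "B a (Suc (Suc a)) = w * (Eb (Suc a) * E a) - E a * Eb (Suc a)"
    using B_rec[of a "Suc a"] by simp
  have z0: "E (Suc a) * Eb (Suc a) - Eb (Suc a) * E (Suc a) = 0" using assms by (simp add: farEEb)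
  have "R a (Suc (Suc a)) * Eb (Suc a) - (w * (Eb (Suc a) * R a (Suc (Suc a))) + B a (Suc (Suc a)) * E (Suc a) - w * (E (Suc a) * B a (Suc (Suc a)))) = (w * w) * ((E (Suc a) * Eb (Suc a) - Eb (Suc a) * E (Suc a)) * E a) + (- 1) * (E a * (E (Suc a) * Eb (Suc a) - Eb (Suc a) * E (Suc a)))"
    unfolding r2 b2 by (simp add: ss)
  also have "(w * w) * ((E (Suc a) * Eb (Suc a) - Eb (Suc a) * E (Suc a)) * E a) + (- 1) * (E a * (E (Suc a) * Eb (Suc a) - Eb (Suc a) * E (Suc a))) = 0"
    by (simp only: z0 mult_zero_left mult_zero_right add_0_left add_0_right diff_zero)
  finally have "R a (Suc (Suc a)) * Eb (Suc a) - (w * (Eb (Suc a) * R a (Suc (Suc a))) + B a (Suc (Suc a)) * E (Suc a) - w * (E (Suc a) * B a (Suc (Suc a)))) = 0" .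
  then show ?thesis by simp
qed

lemma GBc:
  assumes i1: "1 \<le> i" and ij: "i < jj" and jn: "Suc jj \<le> n"
  shows "R i (Suc jj) * Eb jj = w * (Eb jj * R i (Suc jj)) + B i (Suc jj) * E jj - w * (E jj * B i (Suc jj))"
proof -
  obtain b where b: "jj = Suc b" using ij by (cases jj) auto
  have "i \<le> b" using ij b by simp
  from i1 this show ?thesis
  proof (induction i rule: down_induct)
    case base
    show ?case using i1 ij b jn GBc_base[of b] by auto
  next
    case (step i)
    have f1: "E i * Eb jj = Eb jj * E i" using step jn b by (intro farEEb) auto
    have f2: "E i * E jj = E jj * E i" using step jn b by (intro farEE) auto
    have l: "R i (Suc jj) = w * (R (Suc i) (Suc jj) * E i) - E i * R (Suc i) (Suc jj)"
      using step b jn by (intro R_left) auto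
    have lb: "B i (Suc jj) = w * (B (Suc i) (Suc jj) * E i) - E i * B (Suc i) (Suc jj)"
      using step b jn by (intro B_left) auto
    show ?case unfolding l lb
      by (simp add: ss f1 f1[THEN assoc_rule] f2 f2[THEN assoc_rule] step(3) step(3)[THEN assoc_rule])
  qed
qed

definition Y where "Y a j = Eb (Suc a) * R (Suc (Suc a)) j - w * (R (Suc (Suc a)) j * Eb (Suc a))"

lemma scY: "Y a j * (v * y) = v * (Y a j * y)" "Y a j * v = v * Y a j"
  "Y a j * (w * y) = w * (Y a j * y)" "Y a j * w = w * Y a j"
  using cv cw by (metis mult.assoc)+

lemma GBd_base:
  assumes a1: "1 \<le> a" and an: "Suc (Suc (Suc a)) \<le> n"
  shows "R (Suc a) (Suc (Suc (Suc a))) * Eb a = w * (Eb a * R (Suc a) (Suc (Suc (Suc a))))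
     - Y a (Suc (Suc (Suc a))) * E a + w * (E a * Y a (Suc (Suc (Suc a))))"
proof -
  have r2: "R (Suc a) (Suc (Suc (Suc a))) = w * (E (Suc (Suc a)) * E (Suc a)) - E (Suc a) * E (Suc (Suc a))"
    using RR_rec[of "Suc a" "Suc (Suc a)" w E] by simp
  have y: "Y a (Suc (Suc (Suc a))) = Eb (Suc a) * E (Suc (Suc a)) - w * (E (Suc (Suc a)) * Eb (Suc a))"
    by (simp add: Y_def)
  have z0: "E (Suc (Suc a)) * Eb a - Eb a * E (Suc (Suc a)) = 0" using assms by (simp add: farEEb)
  have z1: "E a * E (Suc (Suc a)) - E (Suc (Suc a)) * E a = 0" using assms by (simp add: farEE)
  have z2: "E a * Eb (Suc a) - v * Eb (Suc a) * E a - (Eb a * E (Suc a) - v * E (Suc a) * Eb a) = 0" using assms q5h[of "a"] by simp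
  have "R (Suc a) (Suc (Suc (Suc a))) * Eb a - (w * (Eb a * R (Suc a) (Suc (Suc (Suc a)))) - Y a (Suc (Suc (Suc a))) * E a + w * (E a * Y a (Suc (Suc (Suc a))))) = (w * w) * ((E a * E (Suc (Suc a)) - E (Suc (Suc a)) * E a) * Eb (Suc a)) + (- 1) * (Eb (Suc a) * (E a * E (Suc (Suc a)) - E (Suc (Suc a)) * E a)) + (- w) * ((E a * Eb (Suc a) - v * Eb (Suc a) * E a - (Eb a * E (Suc a) - v * E (Suc a) * Eb a)) * E (Suc (Suc a))) + (w * w) * (E (Suc (Suc a)) * (E a * Eb (Suc a) - v * Eb (Suc a) * E a - (Eb a * E (Suc a) - v * E (Suc a) * Eb a))) + (w * w) * ((E (Suc (Suc a)) * Eb a - Eb a * E (Suc (Suc a))) * E (Suc a)) + (- 1) * (E (Suc a) * (E (Suc (Suc a)) * Eb a - Eb a * E (Suc (Suc a))))"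
    unfolding r2 y by (simp add: ss)
  also have "(w * w) * ((E a * E (Suc (Suc a)) - E (Suc (Suc a)) * E a) * Eb (Suc a)) + (- 1) * (Eb (Suc a) * (E a * E (Suc (Suc a)) - E (Suc (Suc a)) * E a)) + (- w) * ((E a * Eb (Suc a) - v * Eb (Suc a) * E a - (Eb a * E (Suc a) - v * E (Suc a) * Eb a)) * E (Suc (Suc a))) + (w * w) * (E (Suc (Suc a)) * (E a * Eb (Suc a) - v * Eb (Suc a) * E a - (Eb a * E (Suc a) - v * E (Suc a) * Eb a))) + (w * w) * ((E (Suc (Suc a)) * Eb a - Eb a * E (Suc (Suc a))) * E (Suc a)) + (- 1) * (E (Suc a) * (E (Suc (Suc a)) * Eb a - Eb a * E (Suc (Suc a)))) = 0"
    by (simp only: z0 z1 z2 mult_zero_left mult_zero_right add_0_left add_0_right diff_zero)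
  finally have "R (Suc a) (Suc (Suc (Suc a))) * Eb a - (w * (Eb a * R (Suc a) (Suc (Suc (Suc a)))) - Y a (Suc (Suc (Suc a))) * E a + w * (E a * Y a (Suc (Suc (Suc a))))) = 0" .
  then show ?thesis by simp
qed

lemma GBd:
  assumes a1: "1 \<le> a" and aj: "Suc (Suc (Suc a)) \<le> j" and jn: "j \<le> n"
  shows "R (Suc a) j * Eb a = w * (Eb a * R (Suc a) j) - Y a j * E a + w * (E a * Y a j)"
  using aj le_imp_less_Suc[OF jn]
proof (induction j rule: up_induct)
  case base show ?case using a1 jn aj by (intro GBd_base) auto
next
  case (step j)
  have f1: "E j * Eb a = Eb a * E j" using step a1 by (intro farEEb) auto
  have f2: "E j * E a = E a * E j" using step a1 by (intro farEE) auto
  have f3: "E j * Eb (Suc a) = Eb (Suc a) * E j" using step a1 by (intro farEEb) auto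
  have r: "R (Suc a) (Suc j) = w * (E j * R (Suc a) j) - R (Suc a) j * E j" using step(1) by (intro RR_rec) simp
  have r': "R (Suc (Suc a)) (Suc j) = w * (E j * R (Suc (Suc a)) j) - R (Suc (Suc a)) j * E j" using step(1) by (intro RR_rec) simp
  have ih: "R (Suc a) j * Eb a = w * (Eb a * R (Suc a) j) - (Eb (Suc a) * R (Suc (Suc a)) j - w * (R (Suc (Suc a)) j * Eb (Suc a))) * E a
      + w * (E a * (Eb (Suc a) * R (Suc (Suc a)) j - w * (R (Suc (Suc a)) j * Eb (Suc a))))"
    using step(3) by (simp add: Y_def)
  show ?case unfolding r Y_def r'
    by (simp add: ss f1 f1[THEN assoc_rule] f2 f2[THEN assoc_rule] f3 f3[THEN assoc_rule] ih ih[THEN assoc_rule])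
qed

lemma M_gen_p:
  assumes "1 \<le> p" "p < n" shows "gen v w u (E(p := Eb p)) n p" using assms by (rule genB)

lemma M1:
  assumes k1: "1 \<le> k" and ki: "k < i" and ij: "i < j" and jl: "j < l" and ln: "l \<le> n"
  shows "R i j * B k l = B k l * R i j"
proof -
  obtain p where l: "l = Suc p" using jl by (cases l) auto
  have g: "gen v w u (E(p := Eb p)) n p" using assms l by (intro genB) auto
  have "RR w (E(p := Eb p)) k l * RR w (E(p := Eb p)) i j = RR w (E(p := Eb p)) i j * RR w (E(p := Eb p)) k l"
    using assms l by (intro gen.EE6[OF g]) auto
  moreover have "RR w (E(p := Eb p)) i j = R i j" using assms l by (intro RB_eq) auto
  moreover have "RR w (E(p := Eb p)) k l = B k l" using l by (simp add: B_eq)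
  ultimately show ?thesis by simp
qed

lemma M2:
  assumes i1: "1 \<le> i" and ij: "i < j" and jl: "j < l" and ln: "l \<le> n"
  shows "R i j * B j l = w * (B j l * R i j) - B i l"
proof -
  obtain p where l: "l = Suc p" using jl by (cases l) auto
  have g: "gen v w u (E(p := Eb p)) n p" using assms l by (intro genB) auto
  have "RR w (E(p := Eb p)) i j * RR w (E(p := Eb p)) j l = w * (RR w (E(p := Eb p)) j l * RR w (E(p := Eb p)) i j) - RR w (E(p := Eb p)) i l"
    using assms l by (intro gen.EE2[OF g]) auto
  moreover have "RR w (E(p := Eb p)) i j = R i j" using assms l by (intro RB_eq) auto
  moreover have "RR w (E(p := Eb p)) j l = B j l" "RR w (E(p := Eb p)) i l = B i l" using l by (simp_all add: B_eq)
  ultimately show ?thesis by simp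
qed

lemma M3:
  assumes i1: "1 \<le> i" and ij: "i < j" and jl: "j < l" and ln: "l \<le> n"
  shows "R i j * B i l = v * (B i l * R i j)"
proof -
  obtain p where l: "l = Suc p" using jl by (cases l) auto
  have g: "gen v w u (E(p := Eb p)) n p" using assms l by (intro genB) auto
  have "RR w (E(p := Eb p)) i j * RR w (E(p := Eb p)) i l = v * (RR w (E(p := Eb p)) i l * RR w (E(p := Eb p)) i j)"
    using assms l by (intro gen.EE4[OF g]) auto
  moreover have "RR w (E(p := Eb p)) i j = R i j" using assms l by (intro RB_eq) auto
  moreover have "RR w (E(p := Eb p)) i l = B i l" using l by (simp add: B_eq)
  ultimately show ?thesis by simp
qed

lemma M4:
  assumes i1: "1 \<le> i" and ik: "i < k" and kj: "k < j" and jl: "j < l" and ln: "l \<le> n"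
  shows "R i j * B k l = B k l * R i j + (v - w) * (R k j * B i l)"
proof -
  obtain p where l: "l = Suc p" using jl by (cases l) auto
  have g: "gen v w u (E(p := Eb p)) n p" using assms l by (intro genB) auto
  have "RR w (E(p := Eb p)) i j * RR w (E(p := Eb p)) k l = RR w (E(p := Eb p)) k l * RR w (E(p := Eb p)) i j
     + (v - w) * (RR w (E(p := Eb p)) i l * RR w (E(p := Eb p)) k j)"
    using assms l by (intro gen.EE7[OF g]) auto
  moreover have "RR w (E(p := Eb p)) i l * RR w (E(p := Eb p)) k j = RR w (E(p := Eb p)) k j * RR w (E(p := Eb p)) i l"
    using assms l by (intro gen.EE6[OF g]) auto
  moreover have "RR w (E(p := Eb p)) i j = R i j" "RR w (E(p := Eb p)) k j = R k j" using assms l by (intro RB_eq; auto)+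
  moreover have "RR w (E(p := Eb p)) k l = B k l" "RR w (E(p := Eb p)) i l = B i l" using l by (simp_all add: B_eq)
  ultimately show ?thesis by simp
qed

lemma RR_far:
  assumes k1: "1 \<le> k" and kl: "k < l" and li: "l < i" and ij: "i < j" and jn: "j \<le> n"
  shows "R i j * R k l = R k l * R i j"
proof (rule RR_comm[OF kl _ wcomm])
  fix a assume "k \<le> a" "a < l"
  then show "R i j * E a = E a * R i j" using assms by (intro gen.G_far_R[OF genE, symmetric]) auto
qed

lemma Eb_far_R:
  assumes i1: "1 \<le> i" and ij: "i < j" and jn: "j \<le> n" and a1: "1 \<le> a" and an: "a < n" and far: "a + 1 < i \<or> j < a"
  shows "Eb a * R i j = R i j * Eb a"
proof (rule RR_comm[OF ij _ wcomm])
  fix b assume "i \<le> b" "b < j"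
  then show "Eb a * E b = E b * Eb a" using assms by (intro farEEb[symmetric]) auto
qed

lemma comm_far:
  assumes i1: "1 \<le> i" and ij: "i < j" and jn: "j \<le> n" and k1: "1 \<le> k" and kl: "k < l" and ln: "l \<le> n"
    and far: "j < k \<or> l < i"
  shows "R i j * B k l = B k l * R i j"
proof -
  obtain p where l: "l = Suc p" using kl by (cases l) auto
  have "R i j * RR w (E(p := Eb p)) k l = RR w (E(p := Eb p)) k l * R i j"
  proof (rule RR_comm[OF kl _ wcomm])
    fix a assume a: "k \<le> a" "a < l"
    show "R i j * (E(p := Eb p)) a = (E(p := Eb p)) a * R i j"
    proof (cases "a = p")
      case True
      then show ?thesis using assms a Eb_far_R[of i j a] by auto
    next
      case False
      then show ?thesis using assms a gen.G_far_R[OF genE, of i j a] by auto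
    qed
  qed
  then show ?thesis using l by (simp add: B_eq)
qed

lemma M5:
  assumes i1: "1 \<le> i" and il: "i < l" and lj: "l < j" and jn: "j \<le> n"
  shows "R i j * B i l = w * (B i l * R i j)"
proof (cases "l = Suc i")
  case True
  then show ?thesis using assms GBa[of i j] by simp
next
  case False
  then obtain p where l: "l = Suc p" and ip: "i < p" using il by (cases l) auto
  have "R i j * B i (Suc p) = w * (B i (Suc p) * R i j)"
  proof -
    have bd: "B i (Suc p) = w * (Eb p * R i p) - R i p * Eb p"
        using ip by (rule B_rec)
    have g: "R i j * Eb p = Eb p * R i j"
        using assms ip l by (intro GBb) auto
    have e4: "R i p * R i j = v * (R i j * R i p)"
        using assms ip l by (intro gen.EE4[OF genE]) auto
    have "(R i j * B i (Suc p)) - (w * (B i (Suc p) * R i j)) = (- w) * (((B i (Suc p)) - (w * (Eb p * R i p) - R i p * Eb p)) * R i j) + (1) * (R i j * ((B i (Suc p)) - (w * (Eb p * R i p) - R i p * Eb p))) + (w) * (((R i j * Eb p) - (Eb p * R i j)) * R i p) + (- w) * (R i p * ((R i j * Eb p) - (Eb p * R i j))) + (w) * (((R i p * R i j) - (v * (R i j * R i p))) * Eb p) + (- w * w) * (Eb p * ((R i p * R i j) - (v * (R i j * R i p))))"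
        by (simp add: ss scY)
    also have "(- w) * (((B i (Suc p)) - (w * (Eb p * R i p) - R i p * Eb p)) * R i j) + (1) * (R i j * ((B i (Suc p)) - (w * (Eb p * R i p) - R i p * Eb p))) + (w) * (((R i j * Eb p) - (Eb p * R i j)) * R i p) + (- w) * (R i p * ((R i j * Eb p) - (Eb p * R i j))) + (w) * (((R i p * R i j) - (v * (R i j * R i p))) * Eb p) + (- w * w) * (Eb p * ((R i p * R i j) - (v * (R i j * R i p)))) = 0"
        by (simp only: bd[THEN eq_diff0] e4[THEN eq_diff0] g[THEN eq_diff0] mult_zero_left mult_zero_right add_0_left add_0_right diff_zero minus_zero)
    finally have "(R i j * B i (Suc p)) - (w * (B i (Suc p) * R i j)) = 0" .
    then show ?thesis by simp
  qed
  then show ?thesis using l by simp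
qed

lemma M6:
  assumes i1: "1 \<le> i" and ik: "i < k" and kl: "k < l" and lj: "l < j" and jn: "j \<le> n"
  shows "R i j * B k l = B k l * R i j"
proof (cases "l = Suc k")
  case True
  then show ?thesis using assms GBb[of i k j] by simp
next
  case False
  then obtain p where l: "l = Suc p" and kp: "k < p" using kl by (cases l) auto
  have "R i j * B k (Suc p) = B k (Suc p) * R i j"
  proof -
    have bd: "B k (Suc p) = w * (Eb p * R k p) - R k p * Eb p"
        using kp by (rule B_rec)
    have g: "R i j * Eb p = Eb p * R i j"
        using assms kp l by (intro GBb) auto
    have e6: "R i j * R k p = R k p * R i j"
        using assms kp l by (intro gen.EE6[OF genE]) auto
    have "(R i j * B k (Suc p)) - (B k (Suc p) * R i j) = (- 1) * (((B k (Suc p)) - (w * (Eb p * R k p) - R k p * Eb p)) * R i j) + (1) * (R i j * ((B k (Suc p)) - (w * (Eb p * R k p) - R k p * Eb p))) + (w) * (((R i j * Eb p) - (Eb p * R i j)) * R k p) + (- 1) * (R k p * ((R i j * Eb p) - (Eb p * R i j))) + (- 1) * (((R i j * R k p) - (R k p * R i j)) * Eb p) + (w) * (Eb p * ((R i j * R k p) - (R k p * R i j)))"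
        by (simp add: ss scY)
    also have "(- 1) * (((B k (Suc p)) - (w * (Eb p * R k p) - R k p * Eb p)) * R i j) + (1) * (R i j * ((B k (Suc p)) - (w * (Eb p * R k p) - R k p * Eb p))) + (w) * (((R i j * Eb p) - (Eb p * R i j)) * R k p) + (- 1) * (R k p * ((R i j * Eb p) - (Eb p * R i j))) + (- 1) * (((R i j * R k p) - (R k p * R i j)) * Eb p) + (w) * (Eb p * ((R i j * R k p) - (R k p * R i j))) = 0"
        by (simp only: bd[THEN eq_diff0] e6[THEN eq_diff0] g[THEN eq_diff0] mult_zero_left mult_zero_right add_0_left add_0_right diff_zero minus_zero)
    finally have "(R i j * B k (Suc p)) - (B k (Suc p) * R i j) = 0" .
    then show ?thesis by simp
  qed
  then show ?thesis using l by simp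
qed

lemma M7:
  assumes k1: "1 \<le> k" and ki: "k < i" and il: "i < l" and lj: "l < j" and jn: "j \<le> n"
  shows "R i j * B k l = B k l * R i j + w * (B i l * R k j) - v * (R k j * B i l)"
proof (cases "l = Suc i")
  case True
  have "R i j * B k (Suc i) = B k (Suc i) * R i j + w * (Eb i * R k j) - v * (R k j * Eb i)"
  proof -
    have bd: "B k (Suc i) = w * (Eb i * R k i) - R k i * Eb i"
        using ki by (rule B_rec)
    have ga: "R i j * Eb i = w * (Eb i * R i j)"
        using assms True by (intro GBa) auto
    have e2: "R k i * R i j = w * (R i j * R k i) - R k j"
        using assms True by (intro gen.EE2[OF genE]) auto
    have "(R i j * B k (Suc i)) - (B k (Suc i) * R i j + w * (Eb i * R k j) - v * (R k j * Eb i)) = (- 1) * (((B k (Suc i)) - (w * (Eb i * R k i) - R k i * Eb i)) * R i j) + (1) * (R i j * ((B k (Suc i)) - (w * (Eb i * R k i) - R k i * Eb i))) + (w) * (((R i j * Eb i) - (w * (Eb i * R i j))) * R k i) + (- v) * (R k i * ((R i j * Eb i) - (w * (Eb i * R i j)))) + (v) * (((R k i * R i j) - (w * (R i j * R k i) - R k j)) * Eb i) + (- w) * (Eb i * ((R k i * R i j) - (w * (R i j * R k i) - R k j)))"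
        by (simp add: ss scY)
    also have "(- 1) * (((B k (Suc i)) - (w * (Eb i * R k i) - R k i * Eb i)) * R i j) + (1) * (R i j * ((B k (Suc i)) - (w * (Eb i * R k i) - R k i * Eb i))) + (w) * (((R i j * Eb i) - (w * (Eb i * R i j))) * R k i) + (- v) * (R k i * ((R i j * Eb i) - (w * (Eb i * R i j)))) + (v) * (((R k i * R i j) - (w * (R i j * R k i) - R k j)) * Eb i) + (- w) * (Eb i * ((R k i * R i j) - (w * (R i j * R k i) - R k j))) = 0"
        by (simp only: bd[THEN eq_diff0] e2[THEN eq_diff0] ga[THEN eq_diff0] mult_zero_left mult_zero_right add_0_left add_0_right diff_zero minus_zero)
    finally have "(R i j * B k (Suc i)) - (B k (Suc i) * R i j + w * (Eb i * R k j) - v * (R k j * Eb i)) = 0" .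
    then show ?thesis by simp
  qed
  then show ?thesis using True by simp
next
  case False
  then obtain p where l: "l = Suc p" and ip: "i < p" using il by (cases l) auto
  have "R i j * B k (Suc p) = B k (Suc p) * R i j + w * (B i (Suc p) * R k j) - v * (R k j * B i (Suc p))"
  proof -
    have bd: "B k (Suc p) = w * (Eb p * R k p) - R k p * Eb p"
        using ki ip by (intro B_rec) auto
    have bd2: "B i (Suc p) = w * (Eb p * R i p) - R i p * Eb p"
        using ip by (rule B_rec)
    have g1: "R i j * Eb p = Eb p * R i j"
        using assms ip l by (intro GBb) auto
    have g2: "R k j * Eb p = Eb p * R k j"
        using assms ip l by (intro GBb) auto
    have e7: "R k p * R i j = R i j * R k p + (v - w) * (R k j * R i p)"
        using assms ip l by (intro gen.EE7[OF genE]) auto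
    have e6: "R k j * R i p = R i p * R k j"
        using assms ip l by (intro gen.EE6[OF genE]) auto
    have "(R i j * B k (Suc p)) - (B k (Suc p) * R i j + w * (B i (Suc p) * R k j) - v * (R k j * B i (Suc p))) = (- 1) * (((B k (Suc p)) - (w * (Eb p * R k p) - R k p * Eb p)) * R i j) + (1) * (R i j * ((B k (Suc p)) - (w * (Eb p * R k p) - R k p * Eb p))) + (- w) * (((B i (Suc p)) - (w * (Eb p * R i p) - R i p * Eb p)) * R k j) + (v) * (R k j * ((B i (Suc p)) - (w * (Eb p * R i p) - R i p * Eb p))) + (w) * (((R i j * Eb p) - (Eb p * R i j)) * R k p) + (- 1) * (R k p * ((R i j * Eb p) - (Eb p * R i j))) + (1) * (((R k j * Eb p) - (Eb p * R k j)) * R i p) + (- w) * (R i p * ((R k j * Eb p) - (Eb p * R k j))) + (1) * (((R k p * R i j) - (R i j * R k p + (v - w) * (R k j * R i p))) * Eb p) + (- w) * (Eb p * ((R k p * R i j) - (R i j * R k p + (v - w) * (R k j * R i p)))) + (- w) * (((R k j * R i p) - (R i p * R k j)) * Eb p) + (w * w) * (Eb p * ((R k j * R i p) - (R i p * R k j)))"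
        by (simp add: ss scY)
    also have "(- 1) * (((B k (Suc p)) - (w * (Eb p * R k p) - R k p * Eb p)) * R i j) + (1) * (R i j * ((B k (Suc p)) - (w * (Eb p * R k p) - R k p * Eb p))) + (- w) * (((B i (Suc p)) - (w * (Eb p * R i p) - R i p * Eb p)) * R k j) + (v) * (R k j * ((B i (Suc p)) - (w * (Eb p * R i p) - R i p * Eb p))) + (w) * (((R i j * Eb p) - (Eb p * R i j)) * R k p) + (- 1) * (R k p * ((R i j * Eb p) - (Eb p * R i j))) + (1) * (((R k j * Eb p) - (Eb p * R k j)) * R i p) + (- w) * (R i p * ((R k j * Eb p) - (Eb p * R k j))) + (1) * (((R k p * R i j) - (R i j * R k p + (v - w) * (R k j * R i p))) * Eb p) + (- w) * (Eb p * ((R k p * R i j) - (R i j * R k p + (v - w) * (R k j * R i p)))) + (- w) * (((R k j * R i p) - (R i p * R k j)) * Eb p) + (w * w) * (Eb p * ((R k j * R i p) - (R i p * R k j))) = 0"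
        by (simp only: bd[THEN eq_diff0] bd2[THEN eq_diff0] e6[THEN eq_diff0] e7[THEN eq_diff0] g1[THEN eq_diff0] g2[THEN eq_diff0] mult_zero_left mult_zero_right add_0_left add_0_right diff_zero minus_zero)
    finally have "(R i j * B k (Suc p)) - (B k (Suc p) * R i j + w * (B i (Suc p) * R k j) - v * (R k j * B i (Suc p))) = 0" .
    then show ?thesis by simp
  qed
  then show ?thesis using l by simp
qed

lemma M8:
  assumes i1: "1 \<le> i" and ij: "i < j" and jn: "j \<le> n"
  shows "R i j * B i j = B i j * R i j"
proof (cases "j = Suc i")
  case True
  then show ?thesis using assms farEEb[of i i] by simp
next
  case False
  then obtain jj where j: "j = Suc jj" and ijj: "i < jj" using ij by (cases j) auto
  have "R i (Suc jj) * B i (Suc jj) = B i (Suc jj) * R i (Suc jj)"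
  proof -
    have bd: "B i (Suc jj) = w * (Eb jj * R i jj) - R i jj * Eb jj"
        using ijj by (rule B_rec)
    have gc: "R i (Suc jj) * Eb jj = w * (Eb jj * R i (Suc jj)) + B i (Suc jj) * E jj - w * (E jj * B i (Suc jj))"
        using assms ijj j by (intro GBc) auto
    have e4: "R i jj * R i (Suc jj) = v * (R i (Suc jj) * R i jj)"
        using assms ijj j by (intro gen.EE4[OF genE]) auto
    have c3: "R i jj * B i (Suc jj) = v * (B i (Suc jj) * R i jj)"
        using assms ijj j by (intro M3) auto
    have rd: "R i jj * E jj = w * (E jj * R i jj) - R i (Suc jj)"
        using ijj RR_rec[of i jj w E] by simp
    have "(v + w) * ((R i (Suc jj) * B i (Suc jj)) - (B i (Suc jj) * R i (Suc jj))) = (- w) * (((B i (Suc jj)) - (w * (Eb jj * R i jj) - R i jj * Eb jj)) * R i (Suc jj)) + (v) * (R i (Suc jj) * ((B i (Suc jj)) - (w * (Eb jj * R i jj) - R i jj * Eb jj))) + (1) * (((R i (Suc jj) * Eb jj) - (w * (Eb jj * R i (Suc jj)) + B i (Suc jj) * E jj - w * (E jj * B i (Suc jj)))) * R i jj) + (- 1) * (R i jj * ((R i (Suc jj) * Eb jj) - (w * (Eb jj * R i (Suc jj)) + B i (Suc jj) * E jj - w * (E jj * B i (Suc jj))))) + (1) * (((R i jj * R i (Suc jj)) - (v * (R i (Suc jj) * R i jj))) * Eb jj) + (- w * w) * (Eb jj * ((R i jj * R i (Suc jj)) - (v * (R i (Suc jj) * R i jj)))) + (- 1) * (((R i jj *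 B i (Suc jj)) - (v * (B i (Suc jj) * R i jj))) * E jj) + (w * w) * (E jj * ((R i jj * B i (Suc jj)) - (v * (B i (Suc jj) * R i jj)))) + (w) * (((R i jj * E jj) - (w * (E jj * R i jj) - R i (Suc jj))) * B i (Suc jj)) + (- v) * (B i (Suc jj) * ((R i jj * E jj) - (w * (E jj * R i jj) - R i (Suc jj))))"
        by (simp add: ss scY)
    also have "(- w) * (((B i (Suc jj)) - (w * (Eb jj * R i jj) - R i jj * Eb jj)) * R i (Suc jj)) + (v) * (R i (Suc jj) * ((B i (Suc jj)) - (w * (Eb jj * R i jj) - R i jj * Eb jj))) + (1) * (((R i (Suc jj) * Eb jj) - (w * (Eb jj * R i (Suc jj)) + B i (Suc jj) * E jj - w * (E jj * B i (Suc jj)))) * R i jj) + (- 1) * (R i jj * ((R i (Suc jj) * Eb jj) - (w * (Eb jj * R i (Suc jj)) + B i (Suc jj) * E jj - w * (E jj * B i (Suc jj))))) + (1) * (((R i jj * R i (Suc jj)) - (v * (R i (Suc jj) * R i jj))) * Eb jj) + (- w * w) * (Eb jj * ((R i jj * R i (Suc jj)) - (v * (R i (Suc jj) * R i jj)))) + (- 1) * (((R i jj * B i (Suc jj)) - (v * (B i (Suc jj) * R i jj))) * E jj) + (w * w) * (E jj * ((R i jj * B i (Suc jj)) - (v * (B i (Suc jj) * R i jj)))) + (w) * (((R i jj * E jj) - (w * (E jj * R i jj) - R i (Suc jj))) * B i (Suc jj)) + (- v) * (B i (Suc jj) * ((R i jj * E jj) - (w * (E jj * R i jj) - R i (Suc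 jj)))) = 0"
        by (simp only: bd[THEN eq_diff0] c3[THEN eq_diff0] e4[THEN eq_diff0] gc[THEN eq_diff0] rd[THEN eq_diff0] mult_zero_left mult_zero_right add_0_left add_0_right diff_zero minus_zero)
    finally have "(v + w) * ((R i (Suc jj) * B i (Suc jj)) - (B i (Suc jj) * R i (Suc jj))) = 0" .
    from uvw_cancel[OF this] show ?thesis by simp
  qed
  then show ?thesis using j by simp
qed

lemma M9:
  assumes i1: "1 \<le> i" and ik: "i < k" and kj: "k < j" and jn: "j \<le> n"
  shows "R i j * B k j = w * (B k j * R i j) + B i j * R k j - w * (R k j * B i j)"
proof -
  obtain jj where j: "j = Suc jj" using kj by (cases j) auto
  show ?thesis
  proof (cases "k = jj")
    case True
    then show ?thesis using assms j GBc[of i jj] by simp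
  next
    case False
    then have kjj: "k < jj" using kj j by simp
    have "R i (Suc jj) * B k (Suc jj) = w * (B k (Suc jj) * R i (Suc jj)) + B i (Suc jj) * R k (Suc jj) - w * (R k (Suc jj) * B i (Suc jj))"
    proof -
      have bd: "B k (Suc jj) = w * (Eb jj * R k jj) - R k jj * Eb jj"
          using kjj by (rule B_rec)
      have gc: "R i (Suc jj) * Eb jj = w * (Eb jj * R i (Suc jj)) + B i (Suc jj) * E jj - w * (E jj * B i (Suc jj))"
          using assms kjj j by (intro GBc) auto
      have e6: "R i (Suc jj) * R k jj = R k jj * R i (Suc jj)"
          using assms kjj j by (intro gen.EE6[OF genE]) auto
      have c5: "R k jj * B i (Suc jj) = B i (Suc jj) * R k jj"
          using assms kjj j by (intro M1) auto
      have rd: "R k jj * E jj = w * (E jj * R k jj) - R k (Suc jj)"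
          using kjj RR_rec[of k jj w E] by simp
      have "(R i (Suc jj) * B k (Suc jj)) - (w * (B k (Suc jj) * R i (Suc jj)) + B i (Suc jj) * R k (Suc jj) - w * (R k (Suc jj) * B i (Suc jj))) = (- w) * (((B k (Suc jj)) - (w * (Eb jj * R k jj) - R k jj * Eb jj)) * R i (Suc jj)) + (1) * (R i (Suc jj) * ((B k (Suc jj)) - (w * (Eb jj * R k jj) - R k jj * Eb jj))) + (w) * (((R i (Suc jj) * Eb jj) - (w * (Eb jj * R i (Suc jj)) + B i (Suc jj) * E jj - w * (E jj * B i (Suc jj)))) * R k jj) + (- 1) * (R k jj * ((R i (Suc jj) * Eb jj) - (w * (Eb jj * R i (Suc jj)) + B i (Suc jj) * E jj - w * (E jj * B i (Suc jj))))) + (- 1) * (((R i (Suc jj) * R k jj) - (R k jj * R i (Suc jj))) * Eb jj) + (w * w) * (Eb jj * ((R i (Suc jj) * R k jj) - (R k jj * R i (Suc jj)))) + (- 1) * (((R k jj * B i (Suc jj)) - (B i (Suc jj) * R k jj)) * E jj) + (w * w) * (E jj * ((R k jj * B i (Suc jj)) - (B i (Suc jj) * R k jj))) + (w) * (((R k jj * E jj) - (w * (E jj * R k jj) - R k (Suc jj))) * B i (Suc jj)) + (- 1) * (B i (Suc jj) * ((R k jj * E jj) - (w * (E jj * R k jj) - R k (Suc jj))))"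
          by (simp add: ss scY)
      also have "(- w) * (((B k (Suc jj)) - (w * (Eb jj * R k jj) - R k jj * Eb jj)) * R i (Suc jj)) + (1) * (R i (Suc jj) * ((B k (Suc jj)) - (w * (Eb jj * R k jj) - R k jj * Eb jj))) + (w) * (((R i (Suc jj) * Eb jj) - (w * (Eb jj * R i (Suc jj)) + B i (Suc jj) * E jj - w * (E jj * B i (Suc jj)))) * R k jj) + (- 1) * (R k jj * ((R i (Suc jj) * Eb jj) - (w * (Eb jj * R i (Suc jj)) + B i (Suc jj) * E jj - w * (E jj * B i (Suc jj))))) + (- 1) * (((R i (Suc jj) * R k jj) - (R k jj * R i (Suc jj))) * Eb jj) + (w * w) * (Eb jj * ((R i (Suc jj) * R k jj) - (R k jj * R i (Suc jj)))) + (- 1) * (((R k jj * B i (Suc jj)) - (B i (Suc jj) * R k jj)) * E jj) + (w * w) * (E jj * ((R k jj * B i (Suc jj)) - (B i (Suc jj) * R k jj))) + (w) * (((R k jj * E jj) - (w * (E jj * R k jj) - R k (Suc jj))) * B i (Suc jj)) + (- 1) * (B i (Suc jj) * ((R k jj * E jj) - (w * (E jj * R k jj) - R k (Suc jj)))) = 0"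
          by (simp only: bd[THEN eq_diff0] c5[THEN eq_diff0] e6[THEN eq_diff0] gc[THEN eq_diff0] rd[THEN eq_diff0] mult_zero_left mult_zero_right add_0_left add_0_right diff_zero minus_zero)
      finally have "(R i (Suc jj) * B k (Suc jj)) - (w * (B k (Suc jj) * R i (Suc jj)) + B i (Suc jj) * R k (Suc jj) - w * (R k (Suc jj) * B i (Suc jj))) = 0" .
      then show ?thesis by simp
    qed
    then show ?thesis using j by simp
  qed
qed

lemma M10:
  assumes k1: "1 \<le> k" and ki: "k < i" and ij: "i < j" and jn: "j \<le> n"
  shows "R i j * B k j = v * (B k j * R i j) - v * (R k j * B i j) + B i j * R k j"
proof -
  obtain jj where j: "j = Suc jj" using ij by (cases j) auto
  have "i \<le> jj" using ij j by simp
  from ki[THEN Suc_leI] this show ?thesis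
  proof (induction i rule: down_induct)
    case base
    have "R jj (Suc jj) * B k (Suc jj) = v * (B k (Suc jj) * R jj (Suc jj)) - v * (R k (Suc jj) * B jj (Suc jj)) + B jj (Suc jj) * R k (Suc jj)"
    proof -
      have bd: "B k (Suc jj) = w * (Eb jj * R k jj) - R k jj * Eb jj"
          using ki ij j by (intro B_rec) auto
      have ee: "E jj * Eb jj = Eb jj * E jj"
          using assms j by (intro farEEb) auto
      have rd: "R k jj * E jj = w * (E jj * R k jj) - R k (Suc jj)"
          using ki ij j RR_rec[of k jj w E] by simp
      have "(E jj * B k (Suc jj)) - (v * (B k (Suc jj) * E jj) - v * (R k (Suc jj) * Eb jj) + Eb jj * R k (Suc jj)) = (- v) * (((B k (Suc jj)) - (w * (Eb jj * R k jj) - R k jj * Eb jj)) * E jj) + (1) * (E jj * ((B k (Suc jj)) - (w * (Eb jj * R k jj) - R k jj * Eb jj))) + (w) * (((E jj * Eb jj) - (Eb jj * E jj)) * R k jj) + (- v) * (R k jj * ((E jj * Eb jj) - (Eb jj * E jj))) + (v) * (((R k jj * E jj) - (w * (E jj * R k jj) - R k (Suc jj))) * Eb jj) + (- 1) * (Eb jj * ((R k jj * E jj) - (w * (E jj * R k jj) - R k (Suc jj))))"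
          by (simp add: ss scY)
      also have "(- v) * (((B k (Suc jj)) - (w * (Eb jj * R k jj) - R k jj * Eb jj)) * E jj) + (1) * (E jj * ((B k (Suc jj)) - (w * (Eb jj * R k jj) - R k jj * Eb jj))) + (w) * (((E jj * Eb jj) - (Eb jj * E jj)) * R k jj) + (- v) * (R k jj * ((E jj * Eb jj) - (Eb jj * E jj))) + (v) * (((R k jj * E jj) - (w * (E jj * R k jj) - R k (Suc jj))) * Eb jj) + (- 1) * (Eb jj * ((R k jj * E jj) - (w * (E jj * R k jj) - R k (Suc jj)))) = 0"
          by (simp only: bd[THEN eq_diff0] ee[THEN eq_diff0] rd[THEN eq_diff0] mult_zero_left mult_zero_right add_0_left add_0_right diff_zero minus_zero)
      finally have "(E jj * B k (Suc jj)) - (v * (B k (Suc jj) * E jj) - v * (R k (Suc jj) * Eb jj) + Eb jj * R k (Suc jj)) = 0" .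
      then show ?thesis by simp
    qed
    then show ?case using j by simp
  next
    case (step i)
    have ih: "R (Suc i) j * B k j = v * (B k j * R (Suc i) j) - v * (R k j * B (Suc i) j) + B (Suc i) j * R k j"
      by (rule step(3))
    have xl: "R i j = w * (R (Suc i) j * E i) - E i * R (Suc i) j"
        using step k1 j jn by (intro R_left) auto
    have bl: "B i j = w * (B (Suc i) j * E i) - E i * B (Suc i) j"
        using step k1 j jn by (intro B_left) auto
    have ih2: "R (Suc i) j * B k j = v * (B k j * R (Suc i) j) - v * (R k j * B (Suc i) j) + B (Suc i) j * R k j"
        by (rule ih)
    have c1: "E i * B k j = B k j * E i"
        using M1[of k i "Suc i" j] step k1 j jn by auto
    have c2: "E i * R k j = R k j * E i"
        using gen.G_mid[OF genE, of k i j] step k1 j jn by auto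
    have "(R i j * B k j) - (v * (B k j * R i j) - v * (R k j * B i j) + B i j * R k j) = (1) * (((R i j) - (w * (R (Suc i) j * E i) - E i * R (Suc i) j)) * B k j) + (- v) * (B k j * ((R i j) - (w * (R (Suc i) j * E i) - E i * R (Suc i) j))) + (- 1) * (((B i j) - (w * (B (Suc i) j * E i) - E i * B (Suc i) j)) * R k j) + (v) * (R k j * ((B i j) - (w * (B (Suc i) j * E i) - E i * B (Suc i) j))) + (w) * (((R (Suc i) j * B k j) - (v * (B k j * R (Suc i) j) - v * (R k j * B (Suc i) j) + B (Suc i) j * R k j)) * E i) + (- 1) * (E i * ((R (Suc i) j * B k j) - (v * (B k j * R (Suc i) j) - v * (R k j * B (Suc i) j) + B (Suc i) j * R k j))) + (- v) * (((E i * B k j) - (B k j * E i)) * R (Suc i) j) + (w) * (R (Suc i) j * ((E i * B k j) - (B k j * E i))) + (v) * (((E i * R k j) - (R k j * E i)) * B (Suc i) j) + (- w) * (B (Suc i) j * ((E i * R k j) - (R k j * E i)))"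
        by (simp add: ss scY)
    also have "(1) * (((R i j) - (w * (R (Suc i) j * E i) - E i * R (Suc i) j)) * B k j) + (- v) * (B k j * ((R i j) - (w * (R (Suc i) j * E i) - E i * R (Suc i) j))) + (- 1) * (((B i j) - (w * (B (Suc i) j * E i) - E i * B (Suc i) j)) * R k j) + (v) * (R k j * ((B i j) - (w * (B (Suc i) j * E i) - E i * B (Suc i) j))) + (w) * (((R (Suc i) j * B k j) - (v * (B k j * R (Suc i) j) - v * (R k j * B (Suc i) j) + B (Suc i) j * R k j)) * E i) + (- 1) * (E i * ((R (Suc i) j * B k j) - (v * (B k j * R (Suc i) j) - v * (R k j * B (Suc i) j) + B (Suc i) j * R k j))) + (- v) * (((E i * B k j) - (B k j * E i)) * R (Suc i) j) + (w) * (R (Suc i) j * ((E i * B k j) - (B k j * E i))) + (v) * (((E i * R k j) - (R k j * E i)) * B (Suc i) j) + (- w) * (B (Suc i) j * ((E i * R k j) - (R k j * E i))) = 0"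
        by (simp only: bl[THEN eq_diff0] c1[THEN eq_diff0] c2[THEN eq_diff0] ih2[THEN eq_diff0] xl[THEN eq_diff0] mult_zero_left mult_zero_right add_0_left add_0_right diff_zero minus_zero)
    finally have "(R i j * B k j) - (v * (B k j * R i j) - v * (R k j * B i j) + B i j * R k j) = 0" .
    then show ?case by simp
  qed
qed

lemma Y_far:
  assumes k1: "1 \<le> k" and ka: "k < a" and aj: "Suc (Suc a) < j" and jn: "j \<le> n"
  shows "Y a j * R k a = R k a * Y a j"
proof -
  have c1: "Eb (Suc a) * R k a = R k a * Eb (Suc a)" using assms by (intro Eb_far_R) auto
  have c2: "R (Suc (Suc a)) j * R k a = R k a * R (Suc (Suc a)) j" using assms by (intro RR_far) auto
  show ?thesis unfolding Y_def by (simp add: ss c1 c1[THEN assoc_rule] c2 c2[THEN assoc_rule])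
qed

lemma M11:
  assumes k1: "1 \<le> k" and ki: "k < i" and ij: "Suc i < j" and jn: "j \<le> n"
  shows "R i j * B k i = w * (B k i * R i j) - (Eb i * R (Suc i) j - w * (R (Suc i) j * Eb i)) * R k i
     + w * (R k i * (Eb i * R (Suc i) j - w * (R (Suc i) j * Eb i)))"
proof -
  obtain a where i: "i = Suc a" using ki by (cases i) auto
  have "R (Suc a) j * B k (Suc a) = w * (B k (Suc a) * R (Suc a) j) - Y a j * R k (Suc a) + w * (R k (Suc a) * Y a j)"
  proof (cases "k = a")
    case True
    then show ?thesis using assms i GBd[of a j] by simp
  next
    case False
    then have ka: "k < a" using ki i by simp
    have bd: "B k (Suc a) = w * (Eb a * R k a) - R k a * Eb a"
        using ka by (rule B_rec)
    have gd: "R (Suc a) j * Eb a = w * (Eb a * R (Suc a) j) - Y a j * E a + w * (E a * Y a j)"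
        using assms i ka by (intro GBd) auto
    have c1: "R (Suc a) j * R k a = R k a * R (Suc a) j"
        using assms i ka by (intro RR_far) auto
    have c2: "Y a j * R k a = R k a * Y a j"
        using assms i ka by (intro Y_far) auto
    have rd: "R k a * E a = w * (E a * R k a) - R k (Suc a)"
        using ka RR_rec[of k a w E] by simp
    have "(R (Suc a) j * B k (Suc a)) - (w * (B k (Suc a) * R (Suc a) j) - Y a j * R k (Suc a) + w * (R k (Suc a) * Y a j)) = (- w) * (((B k (Suc a)) - (w * (Eb a * R k a) - R k a * Eb a)) * R (Suc a) j) + (1) * (R (Suc a) j * ((B k (Suc a)) - (w * (Eb a * R k a) - R k a * Eb a))) + (w) * (((R (Suc a) j * Eb a) - (w * (Eb a * R (Suc a) j) - Y a j * E a + w * (E a * Y a j))) * R k a) + (- 1) * (R k a * ((R (Suc a) j * Eb a) - (w * (Eb a * R (Suc a) j) - Y a j * E a + w * (E a * Y a j)))) + (- 1) * (((R (Suc a) j * R k a) - (R k a * R (Suc a) j)) * Eb a) + (w * w) * (Eb a * ((R (Suc a) j * R k a) - (R k a * R (Suc a) j))) + (- 1) * (((Y a j * R k a) - (R k a * Y a j)) * E a) + (w * w) * (E a * ((Y a j * R k a) - (R k a * Y a j))) + (- w) * (((R k a * E a) - (w * (E a * R k a) - R k (Suc a))) * Y a j) + (1) * (Y a j * ((R k a * E a) - (w * (E a * R k a) - R k (Suc a))))"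
        by (simp add: ss scY)
    also have "(- w) * (((B k (Suc a)) - (w * (Eb a * R k a) - R k a * Eb a)) * R (Suc a) j) + (1) * (R (Suc a) j * ((B k (Suc a)) - (w * (Eb a * R k a) - R k a * Eb a))) + (w) * (((R (Suc a) j * Eb a) - (w * (Eb a * R (Suc a) j) - Y a j * E a + w * (E a * Y a j))) * R k a) + (- 1) * (R k a * ((R (Suc a) j * Eb a) - (w * (Eb a * R (Suc a) j) - Y a j * E a + w * (E a * Y a j)))) + (- 1) * (((R (Suc a) j * R k a) - (R k a * R (Suc a) j)) * Eb a) + (w * w) * (Eb a * ((R (Suc a) j * R k a) - (R k a * R (Suc a) j))) + (- 1) * (((Y a j * R k a) - (R k a * Y a j)) * E a) + (w * w) * (E a * ((Y a j * R k a) - (R k a * Y a j))) + (- w) * (((R k a * E a) - (w * (E a * R k a) - R k (Suc a))) * Y a j) + (1) * (Y a j * ((R k a * E a) - (w * (E a * R k a) - R k (Suc a)))) = 0"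
        by (simp only: bd[THEN eq_diff0] c1[THEN eq_diff0] c2[THEN eq_diff0] gd[THEN eq_diff0] rd[THEN eq_diff0] mult_zero_left mult_zero_right add_0_left add_0_right diff_zero minus_zero)
    finally have "(R (Suc a) j * B k (Suc a)) - (w * (B k (Suc a) * R (Suc a) j) - Y a j * R k (Suc a) + w * (R k (Suc a) * Y a j)) = 0" .
    then show ?thesis by simp
  qed
  then show ?thesis using i by (simp add: Y_def)
qed

end

lemma vv_nz: "vv \<noteq> 0"
  by (simp add: vv_def Zero_fract_def eq_fract)

lemma vv2_nz: "vv + inverse vv \<noteq> 0"
proof
  assume h: "vv + inverse vv = 0"
  have "vv * (vv + inverse vv) = vv * vv + 1" using vv_nz by (simp add: distrib_left)
  then have "vv * vv + 1 = 0" using h by simp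
  moreover have "vv * vv + 1 = Fract ([:0, 1:] * [:0, 1:] + 1) 1"
    by (simp add: vv_def One_fract_def)
  ultimately have "Fract ([:0, 1:] * [:0, 1:] + 1) (1::rat poly) = Fract 0 1" by (simp add: Zero_fract_def)
  then show False by (simp add: eq_fract one_pCons)
qed

lemma rootEb_eq: "rootEb_aux w E Eb k d = rootE_aux w (E(k + d := Eb (k + d))) k d"
proof (cases d)
  case 0 then show ?thesis by simp
next
  case (Suc d')
  have "rootE_aux w (E(k + Suc d' := Eb (k + Suc d'))) k d' = rootE_aux w E k d'"
    by (rule rootE_local) auto
  then show ?thesis using Suc by simp
qed

lemma qEb_RR: "k < l \<Longrightarrow> qEb s E Eb k l = RR (s (inverse vv)) (E(l - 1 := Eb (l - 1))) k l"
proof -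
  assume "k < l"
  then have "k + (l - k - 1) = l - 1" by simp
  then show ?thesis unfolding qEb_def RR_def by (simp add: rootEb_eq)
qed

theorem lemma2p10:
  fixes s :: "qv \<Rightarrow> 'a::ring_1"
    and K Ki Kb E Eb F Fb :: "nat \<Rightarrow> 'a"
    and n i j k l :: nat
  assumes alg: "qv_algebra s"
    and rel: "qq_relations s n K Ki Kb E Eb F Fb"
    and ij: "1 \<le> i" "i < j" "j \<le> n"
    and kl: "1 \<le> k" "k < l" "l \<le> n"
  shows
   "((i < j \<and> j < k \<and> k < l) \<or> (i < k \<and> k < l \<and> l < j) \<or> (i = k \<and> j = l) \<or>
     (k < l \<and> l < i \<and> i < j) \<or> (k < i \<and> i < j \<and> j < l)
       \<longrightarrow> qE s E i j * qEb s E Eb k l = qEb s E Eb k l * qE s E i j)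
    \<and> (i < j \<and> j = k \<and> k < l \<longrightarrow>
         qE s E i j * qEb s E Eb k l
           = s (inverse vv) * qEb s E Eb k l * qE s E i j - qEb s E Eb i l)
    \<and> (i = k \<and> k < j \<and> j < l \<longrightarrow>
         qE s E i j * qEb s E Eb k l = s vv * qEb s E Eb k l * qE s E i j)
    \<and> (i < k \<and> k < j \<and> j < l \<longrightarrow>
         qE s E i j * qEb s E Eb k l
           = qEb s E Eb k l * qE s E i j + s (vv - inverse vv) * qE s E k j * qEb s E Eb i l)
    \<and> (i < k \<and> k < j \<and> j = l \<longrightarrow>
         qE s E i j * qEb s E Eb k l
           = s (inverse vv) * qEb s E Eb k l * qE s E i j + qEb s E Eb i j * qE s E k j
             - s (inverse vv) * qE s E k j * qEb s E Eb i j)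
    \<and> (k < l \<and> l = i \<and> i < j \<and> j > i + 1 \<longrightarrow>
         qE s E i j * qEb s E Eb k l
           = s (inverse vv) * qEb s E Eb k l * qE s E i j
             - (Eb i * qE s E (i+1) j - s (inverse vv) * qE s E (i+1) j * Eb i) * qE s E k i
             + s (inverse vv) * qE s E k i
                 * (Eb i * qE s E (i+1) j - s (inverse vv) * qE s E (i+1) j * Eb i))
    \<and> (k = i \<and> i < l \<and> l < j \<longrightarrow>
         qE s E i j * qEb s E Eb k l = s (inverse vv) * qEb s E Eb k l * qE s E i j)
    \<and> (k < i \<and> i < l \<and> l < j \<longrightarrow>
         qE s E i j * qEb s E Eb k l
           = qEb s E Eb k l * qE s E i j + s (inverse vv) * qEb s E Eb i l * qE s E k j
             - s vv * qE s E k j * qEb s E Eb i l)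
    \<and> (k < i \<and> i < j \<and> j = l \<longrightarrow>
         qE s E i j * qEb s E Eb k l
           = s vv * qEb s E Eb k l * qE s E i j - s vv * qE s E k j * qEb s E Eb i j
             + qEb s E Eb i j * qE s E k j)"
proof -
  define v where "v = s vv"
  define w where "w = s (inverse vv)"
  define u where "u = s (inverse (vv + inverse vv))"
  have s1: "s 1 = 1" and sadd: "\<And>a b. s (a + b) = s a + s b" and smul: "\<And>a b. s (a * b) = s a * s b"
    and scen: "\<And>a x. s a * x = x * s a"
    using alg unfolding qv_algebra_def by blast+
  have s0: "s 0 = 0" using sadd[of 0 0] by simp
  have sneg: "s (- a) = - s a" for a
  proof -
    have "s a + s (- a) = 0" using sadd[of a "- a"] s0 by simp
    then show ?thesis by (rule minus_unique[symmetric])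
  qed
  have sdiff: "s (a - b) = s a - s b" for a b using sadd[of a "- b"] sneg[of b] by simp
  have vw: "v * w = 1" unfolding v_def w_def using smul[of vv "inverse vv"] vv_nz s1 by simp
  have wv: "w * v = 1" unfolding v_def w_def using smul[of "inverse vv" vv] vv_nz s1 by simp
  have uvw: "u * (v + w) = 1"
    unfolding u_def v_def w_def using smul[of "inverse (vv + inverse vv)" "vv + inverse vv"] vv2_nz s1 sadd
    by simp
  have svw: "s (vv + inverse vv) = v + w" by (simp add: sadd v_def w_def)
  have svmw: "s (vv - inverse vv) = v - w" by (simp add: sdiff v_def w_def)
  note RL = rel[unfolded qq_relations_def Let_def]
  note Q5 = RL[THEN conjunct2, THEN conjunct2, THEN conjunct2, THEN conjunct2, THEN conjunct2, THEN conjunct2, THEN conjunct1]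
  note Q5b = RL[THEN conjunct2, THEN conjunct2, THEN conjunct2, THEN conjunct2, THEN conjunct2, THEN conjunct2, THEN conjunct2, THEN conjunct1]
  note Q6 = RL[THEN conjunct2, THEN conjunct2, THEN conjunct2, THEN conjunct2, THEN conjunct2, THEN conjunct2, THEN conjunct2, THEN conjunct2]
  have QQ: "qq v w u E Eb n"
  proof (unfold_locales)
    show "v * w = 1" "w * v = 1" "u * (v + w) = 1" by (rule vw, rule wv, rule uvw)
    show "\<And>x. v * x = x * v" "\<And>x. w * x = x * w" "\<And>x. u * x = x * u" unfolding v_def w_def u_def by (rule scen)+
  next
    fix a b :: nat assume h: "1 \<le> a" "a < n" "1 \<le> b" "b < n" "a + 1 < b \<or> b + 1 < a"
    have ab: "a \<in> {1..n-1}" "b \<in> {1..n-1}" using h by auto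
    have "(a + 1 < b \<or> b + 1 < a \<longrightarrow> E a * E b = E b * E a \<and> F a * F b = F b * F a \<and>
         Eb a * Eb b = - (Eb b * Eb a) \<and> Fb a * Fb b = - (Fb b * Fb a))"
      using bspec[OF bspec[OF Q5 ab(1)] ab(2)] by (rule conjunct2)
    then show "E a * E b = E b * E a" using h(5) by blast
  next
    fix a b :: nat assume h: "1 \<le> a" "a < n" "1 \<le> b" "b < n" "\<not> (a = b + 1 \<or> b = a + 1)"
    have ab: "a \<in> {1..n-1}" "b \<in> {1..n-1}" using h by auto
    have "(\<not> (a = b + 1 \<or> b = a + 1) \<longrightarrow> E a * Eb b = Eb b * E a \<and> F a * Fb b = Fb b * F a)"
      using bspec[OF bspec[OF Q5 ab(1)] ab(2)] by (rule conjunct1)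
    then show "E a * Eb b = Eb b * E a" using h(5) by blast
  next
    fix a b :: nat assume h: "1 \<le> a" "a < n" "1 \<le> b" "b < n" "a = b + 1 \<or> b = a + 1"
    have ab: "a \<in> {1..n-1}" "b \<in> {1..n-1}" using h by auto
    have "(\<forall>X\<in>{E b, Eb b}. E a ^ 2 * X - s (vv + inverse vv) * E a * X * E a + X * E a ^ 2 = 0)"
      using bspec[OF bspec[OF Q6 ab(1)] ab(2)] h(5) by blast
    then have "E a ^ 2 * E b - s (vv + inverse vv) * E a * E b * E a + E b * E a ^ 2 = 0" by blast
    then show "E a * E a * E b - (v + w) * E a * E b * E a + E b * E a * E a = 0"
      by (simp only: svw power2_eq_square mult.assoc)
  next
    fix a b :: nat assume h: "1 \<le> a" "a < n" "1 \<le> b" "b < n" "a = b + 1 \<or> b = a + 1"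
    have ab: "a \<in> {1..n-1}" "b \<in> {1..n-1}" using h by auto
    have "(\<forall>X\<in>{E b, Eb b}. E a ^ 2 * X - s (vv + inverse vv) * E a * X * E a + X * E a ^ 2 = 0)"
      using bspec[OF bspec[OF Q6 ab(1)] ab(2)] h(5) by blast
    then have "E a ^ 2 * Eb b - s (vv + inverse vv) * E a * Eb b * E a + Eb b * E a ^ 2 = 0" by blast
    then show "E a * E a * Eb b - (v + w) * E a * Eb b * E a + Eb b * E a * E a = 0"
      by (simp only: svw power2_eq_square mult.assoc)
  next
    fix a :: nat assume h: "1 \<le> a" "a + 1 < n"
    then have "1 \<le> a \<and> a + 1 \<le> n - 1" by auto
    then have "E a * Eb (a+1) - s vv * Eb (a+1) * E a = Eb a * E (a+1) - s vv * E (a+1) * Eb a"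
      using Q5b by blast
    then show "E a * Eb (a + 1) - v * Eb (a + 1) * E a = Eb a * E (a + 1) - v * E (a + 1) * Eb a"
      unfolding v_def .
  qed
  interpret Q: qq v w u E Eb n by (rule QQ)
  have qE_eq: "qE s E a b = RR w E a b" for a b by (simp add: qE_def RR_def w_def)
  have qEb_eq: "a < b \<Longrightarrow> qEb s E Eb a b = Q.B a b" for a b by (simp add: qEb_RR Q.B_def flip: w_def)
  have sw: "s (inverse vv) = w" by (simp add: w_def)
  have sv: "s vv = v" by (simp add: v_def)
  note rw = qE_eq sw sv svmw mult.assoc

  have C1: "((i < j \<and> j < k \<and> k < l) \<or> (i < k \<and> k < l \<and> l < j) \<or> (i = k \<and> j = l) \<or>
     (k < l \<and> l < i \<and> i < j) \<or> (k < i \<and> i < j \<and> j < l)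
       \<longrightarrow> qE s E i j * qEb s E Eb k l = qEb s E Eb k l * qE s E i j)"
  proof
    assume h: "(i < j \<and> j < k \<and> k < l) \<or> (i < k \<and> k < l \<and> l < j) \<or> (i = k \<and> j = l) \<or>
     (k < l \<and> l < i \<and> i < j) \<or> (k < i \<and> i < j \<and> j < l)"
    have e: "RR w E i j * Q.B k l = Q.B k l * RR w E i j"
    proof -
      consider "j < k" | "i < k \<and> k < l \<and> l < j" | "i = k \<and> j = l" | "l < i" | "k < i \<and> i < j \<and> j < l"
        using h by blast
      then show ?thesis
      proof cases
        case 1 then show ?thesis using ij kl by (intro Q.comm_far) auto
      next
        case 2 then show ?thesis using ij kl by (intro Q.M6) auto
      next
        case 3 then show ?thesis using ij kl Q.M8[of i j] by auto
      next
        case 4 then show ?thesis using ij kl by (intro Q.comm_far) auto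
      next
        case 5 then show ?thesis using ij kl by (intro Q.M1) auto
      qed
    qed
    show "qE s E i j * qEb s E Eb k l = qEb s E Eb k l * qE s E i j"
      using e kl by (simp add: rw qEb_eq)
  qed
  have C2: "(i < j \<and> j = k \<and> k < l \<longrightarrow>
         qE s E i j * qEb s E Eb k l
           = s (inverse vv) * qEb s E Eb k l * qE s E i j - qEb s E Eb i l)"
  proof
    assume h: "i < j \<and> j = k \<and> k < l"
    have e: "RR w E i k * Q.B k l = w * (Q.B k l * RR w E i k) - Q.B i l" using h ij kl by (intro Q.M2) auto
    show "qE s E i j * qEb s E Eb k l = s (inverse vv) * qEb s E Eb k l * qE s E i j - qEb s E Eb i l"
      using e h kl by (simp add: rw qEb_eq)
  qed
  have C3: "(i = k \<and> k < j \<and> j < l \<longrightarrow>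
         qE s E i j * qEb s E Eb k l = s vv * qEb s E Eb k l * qE s E i j)"
  proof
    assume h: "i = k \<and> k < j \<and> j < l"
    have e: "RR w E k j * Q.B k l = v * (Q.B k l * RR w E k j)" using h ij kl by (intro Q.M3) auto
    show "qE s E i j * qEb s E Eb k l = s vv * qEb s E Eb k l * qE s E i j"
      using e h kl by (simp add: rw qEb_eq)
  qed
  have C4: "(i < k \<and> k < j \<and> j < l \<longrightarrow>
         qE s E i j * qEb s E Eb k l
           = qEb s E Eb k l * qE s E i j + s (vv - inverse vv) * qE s E k j * qEb s E Eb i l)"
  proof
    assume h: "i < k \<and> k < j \<and> j < l"
    have e: "RR w E i j * Q.B k l = Q.B k l * RR w E i j + (v - w) * (RR w E k j * Q.B i l)" using h ij kl by (intro Q.M4) auto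
    show "qE s E i j * qEb s E Eb k l = qEb s E Eb k l * qE s E i j + s (vv - inverse vv) * qE s E k j * qEb s E Eb i l"
      using e h kl by (simp add: rw qEb_eq)
  qed
  have C5: "(i < k \<and> k < j \<and> j = l \<longrightarrow>
         qE s E i j * qEb s E Eb k l
           = s (inverse vv) * qEb s E Eb k l * qE s E i j + qEb s E Eb i j * qE s E k j
             - s (inverse vv) * qE s E k j * qEb s E Eb i j)"
  proof
    assume h: "i < k \<and> k < j \<and> j = l"
    have e: "RR w E i j * Q.B k j = w * (Q.B k j * RR w E i j) + Q.B i j * RR w E k j - w * (RR w E k j * Q.B i j)"
      using h ij kl by (intro Q.M9) auto
    show "qE s E i j * qEb s E Eb k l = s (inverse vv) * qEb s E Eb k l * qE s E i j + qEb s E Eb i j * qE s E k j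
             - s (inverse vv) * qE s E k j * qEb s E Eb i j"
      using e h kl by (simp add: rw qEb_eq)
  qed
  have C6: "(k < l \<and> l = i \<and> i < j \<and> j > i + 1 \<longrightarrow>
         qE s E i j * qEb s E Eb k l
           = s (inverse vv) * qEb s E Eb k l * qE s E i j
             - (Eb i * qE s E (i+1) j - s (inverse vv) * qE s E (i+1) j * Eb i) * qE s E k i
             + s (inverse vv) * qE s E k i
                 * (Eb i * qE s E (i+1) j - s (inverse vv) * qE s E (i+1) j * Eb i))"
  proof
    assume h: "k < l \<and> l = i \<and> i < j \<and> j > i + 1"
    have e: "RR w E i j * Q.B k i = w * (Q.B k i * RR w E i j) - (Eb i * RR w E (Suc i) j - w * (RR w E (Suc i) j * Eb i)) * RR w E k i
     + w * (RR w E k i * (Eb i * RR w E (Suc i) j - w * (RR w E (Suc i) j * Eb i)))"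
      using h ij kl by (intro Q.M11) auto
    show "qE s E i j * qEb s E Eb k l
           = s (inverse vv) * qEb s E Eb k l * qE s E i j
             - (Eb i * qE s E (i+1) j - s (inverse vv) * qE s E (i+1) j * Eb i) * qE s E k i
             + s (inverse vv) * qE s E k i
                 * (Eb i * qE s E (i+1) j - s (inverse vv) * qE s E (i+1) j * Eb i)"
      using e h kl by (simp add: rw qEb_eq)
  qed
  have C7: "(k = i \<and> i < l \<and> l < j \<longrightarrow>
         qE s E i j * qEb s E Eb k l = s (inverse vv) * qEb s E Eb k l * qE s E i j)"
  proof
    assume h: "k = i \<and> i < l \<and> l < j"
    have e: "RR w E i j * Q.B i l = w * (Q.B i l * RR w E i j)" using h ij kl by (intro Q.M5) auto
    show "qE s E i j * qEb s E Eb k l = s (inverse vv) * qEb s E Eb k l * qE s E i j"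
      using e h kl by (simp add: rw qEb_eq)
  qed
  have C8: "(k < i \<and> i < l \<and> l < j \<longrightarrow>
         qE s E i j * qEb s E Eb k l
           = qEb s E Eb k l * qE s E i j + s (inverse vv) * qEb s E Eb i l * qE s E k j
             - s vv * qE s E k j * qEb s E Eb i l)"
  proof
    assume h: "k < i \<and> i < l \<and> l < j"
    have e: "RR w E i j * Q.B k l = Q.B k l * RR w E i j + w * (Q.B i l * RR w E k j) - v * (RR w E k j * Q.B i l)"
      using h ij kl by (intro Q.M7) auto
    show "qE s E i j * qEb s E Eb k l = qEb s E Eb k l * qE s E i j + s (inverse vv) * qEb s E Eb i l * qE s E k j
             - s vv * qE s E k j * qEb s E Eb i l"
      using e h kl by (simp add: rw qEb_eq)
  qed
  have C9: "(k < i \<and> i < j \<and> j = l \<longrightarrow>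
         qE s E i j * qEb s E Eb k l
           = s vv * qEb s E Eb k l * qE s E i j - s vv * qE s E k j * qEb s E Eb i j
             + qEb s E Eb i j * qE s E k j)"
  proof
    assume h: "k < i \<and> i < j \<and> j = l"
    have e: "RR w E i j * Q.B k j = v * (Q.B k j * RR w E i j) - v * (RR w E k j * Q.B i j) + Q.B i j * RR w E k j"
      using h ij kl by (intro Q.M10) auto
    show "qE s E i j * qEb s E Eb k l = s vv * qEb s E Eb k l * qE s E i j - s vv * qE s E k j * qEb s E Eb i j
             + qEb s E Eb i j * qE s E k j"
      using e h kl by (simp add: rw qEb_eq)
  qed
  show ?thesis using C1 C2 C3 C4 C5 C6 C7 C8 C9 by blast

qed

end
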